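(* Let $G$ be a finite simple graph with vertex set $V(G)$ and edge set $E(G)$, let $R$ be a nontrivial commutative ring, and let $\omega: E(G)\to R\setminus\{0\}$ be an edge weight. Let $\eta$ be a proper embedding of $G$ in the plane. Then for every proper embedding $\eta'$ of $G$ there is a sign-modification $\omega'$ of $\omega$ such that $$ s(G,\omega,\eta) = s(G,\omega',\eta'). $$
   Context: An embedding of a finite graph $G$ in $\mathbb{R}^2$ assigns to each vertex a distinct point (vertex-point) and to each edge $e=\{v_1,v_2\}$ a smooth curve $[0,1]\to\mathbb{R}^2$ (edge-curve) from the point of $v_1$ to the point of $v_2$ which does not pass twice through the same point and does not pass through any other vertex-point. The embedding is proper if, in addition, any two edge-curves meeting in a point that is not a vertex-point actually cross there (are not tangent there), and there are only finitely many such crossing points. A perfect matching of $G$ is a set $M\subseteq E(G)$ of edges such that every vertex is incident with exactly one edge of $M$. Its weight is $\omega(M)=\prod_{e\in M}\omega(e)$. For a proper embedding $\eta$, let $C(M,\eta)=\sum_{\{e_1,e_2\}\subseteq M}\left|\mathrm{img}(e_1)\cap\mathrm{img}(e_2)\right|$, where the sum is over unordered pairs of distinct edges of $M$ and $\mathrm{img}(e)$ is the image of the edge-curve of $e$ under $\eta$; the sign of $M$ is $\mathrm{sgn}(M,\eta)=(-1)^{C(M,\eta)}$. The signed generating function of perfect matchings is $s(G,\omega,\eta)=\sum_M \mathrm{sgn}(M,\eta)\,\omega(M)$, the sum over all perfect matchings $M$ of $G$. An edge weight $\omega'$ is a sign-modification of $\omega$ if for every $e\in E(G)$ either $\omega'(e)=\omega(e)$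 or $\omega'(e)=-\omega(e)$. *)

theory Defs
  imports "HOL-Analysis.Analysis"
begin

definition simple_graph :: "'v set \<Rightarrow> 'v set set \<Rightarrow> bool" where
  "simple_graph V E \<longleftrightarrow> finite V \<and> (\<forall>e\<in>E. e \<subseteq> V \<and> card e = 2)"

(* The plane R^2 is modelled as the complex numbers. *)
definition img :: "(real \<Rightarrow> complex) \<Rightarrow> complex set" where
  "img \<gamma> = \<gamma> ` {0..1}"

definition smooth_curve :: "(real \<Rightarrow> complex) \<Rightarrow> bool" where
  "smooth_curve \<gamma> \<longleftrightarrow>
     (\<exists>D. (\<forall>t\<in>{0..1}. (\<gamma> has_vector_derivative D t) (at t within {0..1}))
          \<and> continuous_on {0..1} D)"

definition embedding ::
  "'v set \<Rightarrow> 'v set set \<Rightarrow> ('v \<Rightarrow> complex) \<Rightarrow> ('v set \<Rightarrow> real \<Rightarrow> complex) \<Rightarrow> bool" where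
  "embedding V E pos crv \<longleftrightarrow>
     inj_on pos V \<and>
     (\<forall>e\<in>E. smooth_curve (crv e) \<and> inj_on (crv e) {0..1}
             \<and> {crv e 0, crv e 1} = pos ` e
             \<and> (\<forall>t\<in>{0<..<1}. crv e t \<notin> pos ` V))"

(* two tangent vectors are not parallel (determinant nonzero) *)
definition transversal :: "complex \<Rightarrow> complex \<Rightarrow> bool" where
  "transversal u v \<longleftrightarrow> Im (cnj u * v) \<noteq> 0"

definition proper_embedding ::
  "'v set \<Rightarrow> 'v set set \<Rightarrow> ('v \<Rightarrow> complex) \<Rightarrow> ('v set \<Rightarrow> real \<Rightarrow> complex) \<Rightarrow> bool" where
  "proper_embedding V E pos crv \<longleftrightarrow>
     embedding V E pos crv \<and>
     (\<forall>e1\<in>E. \<forall>e2\<in>E. \<forall>s\<in>{0..1}. \<forall>t\<in>{0..1}.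
        e1 \<noteq> e2 \<and> crv e1 s = crv e2 t \<and> crv e1 s \<notin> pos ` V \<longrightarrow>
        transversal (vector_derivative (crv e1) (at s within {0..1}))
                    (vector_derivative (crv e2) (at t within {0..1}))) \<and>
     finite {p. \<exists>e1\<in>E. \<exists>e2\<in>E. e1 \<noteq> e2 \<and> p \<in> img (crv e1) \<inter> img (crv e2) \<and> p \<notin> pos ` V}"

definition perfect_matching :: "'v set \<Rightarrow> 'v set set \<Rightarrow> 'v set set \<Rightarrow> bool" where
  "perfect_matching V E M \<longleftrightarrow> M \<subseteq> E \<and> (\<forall>v\<in>V. \<exists>!e. e \<in> M \<and> v \<in> e)"

definition crossings :: "('v set \<Rightarrow> real \<Rightarrow> complex) \<Rightarrow> 'v set set \<Rightarrow> nat" where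
  "crossings crv M = (\<Sum>P\<in>{P. P \<subseteq> M \<and> card P = 2}. card (\<Inter>e\<in>P. img (crv e)))"

definition signed_pm :: "'v set \<Rightarrow> 'v set set \<Rightarrow> ('v set \<Rightarrow> 'r::comm_ring_1)
     \<Rightarrow> ('v set \<Rightarrow> real \<Rightarrow> complex) \<Rightarrow> 'r" where
  "signed_pm V E \<omega> crv =
     (\<Sum>M\<in>{M. perfect_matching V E M}. (-1) ^ crossings crv M * (\<Prod>e\<in>M. \<omega> e))"

definition sign_modification :: "'v set set \<Rightarrow> ('v set \<Rightarrow> 'r::comm_ring_1) \<Rightarrow> ('v set \<Rightarrow> 'r) \<Rightarrow> bool" where
  "sign_modification E \<omega> \<omega>' \<longleftrightarrow> (\<forall>e\<in>E. \<omega>' e = \<omega> e \<or> \<omega>' e = - \<omega> e)"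

end

theory Submission
  imports Defs "HOL-Complex_Analysis.Complex_Analysis"
begin

definition Fm :: "(real \<Rightarrow> complex) \<Rightarrow> (real \<Rightarrow> complex) \<Rightarrow> complex \<Rightarrow> complex" where
  "Fm \<gamma> \<delta> x = \<gamma> (Re x) - \<delta> (Im x)"

definition rloop :: "real \<Rightarrow> real \<Rightarrow> real \<Rightarrow> complex" where
 "rloop a b = linepath (\<i> * of_real a) (1 + \<i> * of_real a) +++ linepath (1 + \<i> * of_real a) (1 + \<i> * of_real b)
    +++ linepath (1 + \<i> * of_real b) (\<i> * of_real b) +++ linepath (\<i> * of_real b) (\<i> * of_real a)"

lemma Fm_rloop: "Fm \<gamma> \<delta> \<circ> rloop a b = (\<lambda>s. \<gamma> s - \<delta> a) +++ subpath a b (\<lambda>t. \<gamma> 1 - \<delta> t)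
   +++ reversepath (\<lambda>s. \<gamma> s - \<delta> b) +++ subpath b a (\<lambda>t. \<gamma> 0 - \<delta> t)"
proof -
  have 1: "Fm \<gamma> \<delta> \<circ> linepath (\<i> * of_real a) (1 + \<i> * of_real a) = (\<lambda>s. \<gamma> s - \<delta> a)"
    by (rule ext) (simp add: Fm_def linepath_def algebra_simps)
  have 2: "Fm \<gamma> \<delta> \<circ> linepath (1 + \<i> * of_real a) (1 + \<i> * of_real b) = subpath a b (\<lambda>t. \<gamma> 1 - \<delta> t)"
    by (rule ext) (simp add: Fm_def linepath_def subpath_def algebra_simps)
  have 3: "Fm \<gamma> \<delta> \<circ> linepath (1 + \<i> * of_real b) (\<i> * of_real b) = reversepath (\<lambda>s. \<gamma> s - \<delta> b)"
    by (rule ext) (simp add: Fm_def linepath_def reversepath_def algebra_simps)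
  have 4: "Fm \<gamma> \<delta> \<circ> linepath (\<i> * of_real b) (\<i> * of_real a) = subpath b a (\<lambda>t. \<gamma> 0 - \<delta> t)"
    by (rule ext) (simp add: Fm_def linepath_def subpath_def algebra_simps)
  show ?thesis unfolding rloop_def path_compose_join 1 2 3 4 ..
qed

lemma path_rloop: "path (rloop a b)" and closed_rloop: "pathfinish (rloop a b) = pathstart (rloop a b)"
  by (auto simp: rloop_def)

lemma convex_Re_eq: "convex {x::complex. Re x = c}" and convex_Im_eq: "convex {x::complex. Im x = c}"
  by (auto simp: convex_def simp flip: distrib_right)

lemma rloop_image_box: assumes "a \<le> b" shows "path_image (rloop a b) \<subseteq> cbox (\<i> * of_real a) (1 + \<i> * of_real b)"
proof -
  let ?Q = "cbox (\<i> * of_real a) (1 + \<i> * of_real b)"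
  have c: "\<i> * of_real a \<in> ?Q" "1 + \<i> * of_real a \<in> ?Q" "1 + \<i> * of_real b \<in> ?Q" "\<i> * of_real b \<in> ?Q"
    using assms by (auto simp: cbox_complex_eq)
  have "closed_segment p q \<subseteq> ?Q" if "p \<in> ?Q" "q \<in> ?Q" for p q
    using closed_segment_subset[OF that convex_box(1)] .
  then show ?thesis unfolding rloop_def using c
    by (intro subset_trans[OF path_image_join_subset] Un_least; simp)+
qed

lemma rloop_image_bd: "path_image (rloop a b) \<subseteq> {x. Re x = 0 \<or> Re x = 1 \<or> Im x = a \<or> Im x = b}"
proof -
  have "closed_segment (\<i> * of_real a) (1 + \<i> * of_real a) \<subseteq> {x. Im x = a}"
    by (rule closed_segment_subset) (auto simp: convex_Im_eq)
  moreover have "closed_segment (1 + \<i> * of_real a) (1 + \<i> * of_real b) \<subseteq> {x. Re x = 1}"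
    by (rule closed_segment_subset) (auto simp: convex_Re_eq)
  moreover have "closed_segment (1 + \<i> * of_real b) (\<i> * of_real b) \<subseteq> {x. Im x = b}"
    by (rule closed_segment_subset) (auto simp: convex_Im_eq)
  moreover have "closed_segment (\<i> * of_real b) (\<i> * of_real a) \<subseteq> {x. Re x = 0}"
    by (rule closed_segment_subset) (auto simp: convex_Re_eq)
  ultimately show ?thesis unfolding rloop_def
    by (intro subset_trans[OF path_image_join_subset] Un_least; auto)+
qed

lemma continuous_on_Fm:
  assumes "path \<gamma>" "path \<delta>" "S \<subseteq> cbox 0 (1 + \<i>)"
  shows "continuous_on S (Fm \<gamma> \<delta>)"
proof -
  have "continuous_on S (\<lambda>x. \<gamma> (Re x))"
    by (rule continuous_on_compose2[of "{0..1}" \<gamma> S Re])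
       (use assms in \<open>auto simp: path_def cbox_complex_eq intro!: continuous_intros\<close>)
  moreover have "continuous_on S (\<lambda>x. \<delta> (Im x))"
    by (rule continuous_on_compose2[of "{0..1}" \<delta> S Im])
       (use assms in \<open>auto simp: path_def cbox_complex_eq intro!: continuous_intros\<close>)
  ultimately show ?thesis unfolding Fm_def by (simp add: continuous_on_diff)
qed

locale two_curves =
  fixes \<gamma> \<delta> :: "real \<Rightarrow> complex"
  assumes pg: "path \<gamma>" and pd: "path \<delta>" and injg: "inj_on \<gamma> {0..1}" and injd: "inj_on \<delta> {0..1}"
    and g0: "\<gamma> 0 \<notin> path_image \<delta>" and g1: "\<gamma> 1 \<notin> path_image \<delta>"
    and d0: "\<delta> 0 \<notin> path_image \<gamma>" and d1: "\<delta> 1 \<notin> path_image \<gamma>"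
    and fin: "finite (path_image \<gamma> \<inter> path_image \<delta>)"
    and tr: "\<And>s t. s \<in> {0..1} \<Longrightarrow> t \<in> {0..1} \<Longrightarrow> \<gamma> s = \<delta> t \<Longrightarrow>
       \<exists>u v. (\<gamma> has_vector_derivative u) (at s within {0..1}) \<and>
             (\<delta> has_vector_derivative v) (at t within {0..1}) \<and> Im (cnj u * v) \<noteq> 0"
begin

definition "Z = {x. Re x \<in> {0..1} \<and> Im x \<in> {0..1} \<and> \<gamma> (Re x) = \<delta> (Im x)}"

lemma Z_inj_Im: assumes "x \<in> Z" "y \<in> Z" "Im x = Im y" shows "x = y"
proof -
  have "\<gamma> (Re x) = \<gamma> (Re y)" "Re x \<in> {0..1}" "Re y \<in> {0..1}" using assms by (auto simp: Z_def)
  then have "Re x = Re y" using injg by (meson inj_onD)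
  then show ?thesis using assms(3) by (simp add: complex_eq_iff)
qed

lemma Z_bij: "bij_betw (\<lambda>x. \<gamma> (Re x)) Z (path_image \<gamma> \<inter> path_image \<delta>)"
proof (rule bij_betwI')
  fix x y assume xy: "x \<in> Z" "y \<in> Z"
  show "(\<gamma> (Re x) = \<gamma> (Re y)) = (x = y)"
  proof
    assume h: "\<gamma> (Re x) = \<gamma> (Re y)"
    have "Re x \<in> {0..1}" "Re y \<in> {0..1}" "Im x \<in> {0..1}" "Im y \<in> {0..1}"
      "\<gamma> (Re x) = \<delta> (Im x)" "\<gamma> (Re y) = \<delta> (Im y)" using xy by (auto simp: Z_def)
    then have "Re x = Re y" "Im x = Im y" using h injg injd by (metis inj_onD)+
    then show "x = y" by (simp add: complex_eq_iff)
  qed simp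
next
  fix x assume x: "x \<in> Z"
  then have i: "Re x \<in> {0..1}" "Im x \<in> {0..1}" "\<gamma> (Re x) = \<delta> (Im x)" unfolding Z_def by auto
  then have "\<gamma> (Re x) \<in> \<gamma> ` {0..1}" "\<gamma> (Re x) \<in> \<delta> ` {0..1}" by (metis rev_image_eqI)+
  then show "\<gamma> (Re x) \<in> path_image \<gamma> \<inter> path_image \<delta>"
    unfolding path_image_def by auto
next
  fix p assume "p \<in> path_image \<gamma> \<inter> path_image \<delta>"
  then obtain s t where st: "s \<in> {0..1}" "t \<in> {0..1}" "p = \<gamma> s" "p = \<delta> t"
    unfolding path_image_def by auto
  then show "\<exists>x\<in>Z. p = \<gamma> (Re x)"
    by (intro bexI[of _ "of_real s + \<i> * of_real t"]) (auto simp: Z_def)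
qed

lemma finZ: "finite Z" and cardZ: "card Z = card (path_image \<gamma> \<inter> path_image \<delta>)"
  using Z_bij fin bij_betw_finite bij_betw_same_card by blast+

lemma Z_interior: assumes "x \<in> Z" shows "0 < Re x" "Re x < 1" "0 < Im x" "Im x < 1"
proof -
  have x: "Re x \<in> {0..1}" "Im x \<in> {0..1}" "\<gamma> (Re x) = \<delta> (Im x)" using assms by (auto simp: Z_def)
  have "\<gamma> (Re x) \<in> path_image \<gamma>" "\<delta> (Im x) \<in> path_image \<delta>" using x unfolding path_image_def by (metis rev_image_eqI)+
  then show "0 < Re x" "Re x < 1" "0 < Im x" "Im x < 1"
    using x g0 g1 d0 d1 by (metis atLeastAtMost_iff order_less_le)+
qed

definition "G a b = winding_number (Fm \<gamma> \<delta> \<circ> rloop a b) 0"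
definition "ws p a b = winding_number (subpath a b (\<lambda>t. p - \<delta> t)) 0"

lemma path_const_minus: "path (\<lambda>t. p - \<delta> t)"
  using pd unfolding path_def by (intro continuous_intros)

lemma path_minus_const: "path (\<lambda>s. \<gamma> s - p)"
  using pg unfolding path_def by (intro continuous_intros)

lemma no_zero_line:
  assumes "a \<in> {0..1}" "\<forall>x\<in>Z. Im x \<noteq> a"
  shows "0 \<notin> path_image (\<lambda>s. \<gamma> s - \<delta> a)"
proof
  assume "0 \<in> path_image (\<lambda>s. \<gamma> s - \<delta> a)"
  then obtain s where "s \<in> {0..1}" "\<gamma> s = \<delta> a" by (auto simp: path_image_def)
  then have "of_real s + \<i> * of_real a \<in> Z" using assms by (auto simp: Z_def)
  then show False using assms by fastforce
qed

lemma no_zero_side: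
  assumes "a \<in> {0..1}" "b \<in> {0..1}" "p \<notin> path_image \<delta>"
  shows "0 \<notin> path_image (subpath a b (\<lambda>t. p - \<delta> t))"
proof
  assume "0 \<in> path_image (subpath a b (\<lambda>t. p - \<delta> t))"
  then have "0 \<in> path_image (\<lambda>t. p - \<delta> t)" using path_image_subpath_subset assms by blast
  then show False using assms by (auto simp: path_image_def)
qed

lemma G_dec:
  assumes a: "a \<in> {0..1}" and b: "b \<in> {0..1}" and nz: "\<forall>x\<in>Z. Im x \<noteq> a \<and> Im x \<noteq> b"
  shows "G a b = winding_number \<gamma> (\<delta> a) + ws (\<gamma> 1) a b - winding_number \<gamma> (\<delta> b) - ws (\<gamma> 0) a b"
proof -
  let ?P1 = "\<lambda>s. \<gamma> s - \<delta> a" and ?P2 = "subpath a b (\<lambda>t. \<gamma> 1 - \<delta> t)"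
    and ?P3 = "reversepath (\<lambda>s. \<gamma> s - \<delta> b)" and ?P4 = "subpath b a (\<lambda>t. \<gamma> 0 - \<delta> t)"
  have p: "path ?P1" "path ?P2" "path ?P3" "path ?P4"
    using path_minus_const path_const_minus a b by auto
  have n: "0 \<notin> path_image ?P1" "0 \<notin> path_image ?P2" "0 \<notin> path_image ?P3" "0 \<notin> path_image ?P4"
    using no_zero_line[OF a] no_zero_line[OF b] nz no_zero_side[OF a b g1] no_zero_side[OF b a g0] by auto
  have e: "pathfinish ?P1 = pathstart ?P2" "pathfinish ?P2 = pathstart ?P3" "pathfinish ?P3 = pathstart ?P4"
    by (auto simp: pathstart_def pathfinish_def reversepath_def subpath_def)
  have "G a b = winding_number ?P1 0 + winding_number ?P2 0 + winding_number ?P3 0 + winding_number ?P4 0"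
    unfolding G_def Fm_rloop using p n e
    by (simp add: winding_number_join not_in_path_image_join path_join_imp)
  also have "winding_number ?P1 0 = winding_number \<gamma> (\<delta> a)"
    by (simp add: winding_number_offset[of \<gamma> "\<delta> a"])
  also have "winding_number ?P3 0 = - winding_number \<gamma> (\<delta> b)"
    using p n by (simp add: winding_number_reversepath winding_number_offset[of \<gamma> "\<delta> b"])
  also have "winding_number ?P4 0 = - ws (\<gamma> 0) a b"
    unfolding ws_def using n(4) path_const_minus a b
    by (metis path_image_reversepath path_subpath reversepath_subpath winding_number_reversepath)
  finally show ?thesis by (simp add: ws_def)
qed

lemma G_add:
  assumes "a \<in> {0..1}" "b \<in> {0..1}" "c \<in> {0..1}" "\<forall>x\<in>Z. Im x \<noteq> a \<and> Im x \<noteq> b \<and> Im x \<noteq> c"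
  shows "G a c = G a b + G b c"
proof -
  have "ws p a b + ws p b c = ws p a c" if "p \<notin> path_image \<delta>" for p
    unfolding ws_def
    apply (rule winding_number_subpath_combine[OF path_const_minus])
    using that assms by (auto simp: path_image_def)
  then have w1: "ws (\<gamma> 1) a b + ws (\<gamma> 1) b c = ws (\<gamma> 1) a c"
     and w0: "ws (\<gamma> 0) a b + ws (\<gamma> 0) b c = ws (\<gamma> 0) a c"
    using g0 g1 by auto
  have Gac: "G a c = winding_number \<gamma> (\<delta> a) + ws (\<gamma> 1) a c - winding_number \<gamma> (\<delta> c) - ws (\<gamma> 0) a c"
    by (rule G_dec) (use assms in auto)
  have Gab: "G a b = winding_number \<gamma> (\<delta> a) + ws (\<gamma> 1) a b - winding_number \<gamma> (\<delta> b) - ws (\<gamma> 0) a b"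
    by (rule G_dec) (use assms in auto)
  have Gbc: "G b c = winding_number \<gamma> (\<delta> b) + ws (\<gamma> 1) b c - winding_number \<gamma> (\<delta> c) - ws (\<gamma> 0) b c"
    by (rule G_dec) (use assms in auto)
  have "G a b + G b c = winding_number \<gamma> (\<delta> a) + (ws (\<gamma> 1) a b + ws (\<gamma> 1) b c)
      - winding_number \<gamma> (\<delta> c) - (ws (\<gamma> 0) a b + ws (\<gamma> 0) b c)"
    unfolding Gab Gbc by (simp add: algebra_simps)
  then show ?thesis unfolding Gac w1 w0 by simp
qed

lemma G_empty:
  assumes a: "a \<in> {0..1}" and b: "b \<in> {0..1}" and ab: "a \<le> b"
    and nz: "\<forall>x\<in>Z. \<not> (a \<le> Im x \<and> Im x \<le> b)"
  shows "G a b = 0"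
proof -
  let ?Q = "cbox (\<i> * of_real a) (1 + \<i> * of_real b)"
  have Qsub: "?Q \<subseteq> cbox 0 (1 + \<i>)" using a b by (auto simp: cbox_complex_eq)
  have c: "\<i> * of_real a \<in> ?Q" using ab by (auto simp: cbox_complex_eq)
  have "homotopic_loops ?Q (rloop a b) (\<lambda>_. \<i> * of_real a)"
  proof (rule homotopic_loops_linear)
    show "path (\<lambda>_. \<i> * of_real a)" by (rule path_const)
    fix t :: real assume t: "t \<in> {0..1}"
    then have "rloop a b t \<in> ?Q" using rloop_image_box[OF ab] by (auto simp: path_image_def)
    then show "closed_segment (rloop a b t) (\<i> * of_real a) \<subseteq> ?Q"
      using c by (intro closed_segment_subset) auto
  qed (use path_rloop closed_rloop in \<open>auto simp: pathstart_def pathfinish_def\<close>)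
  then have "homotopic_loops (-{0}) (Fm \<gamma> \<delta> \<circ> rloop a b) (Fm \<gamma> \<delta> \<circ> (\<lambda>_. \<i> * of_real a))"
  proof (rule homotopic_loops_continuous_image)
    show "continuous_on ?Q (Fm \<gamma> \<delta>)" using continuous_on_Fm[OF pg pd Qsub] .
    show "Fm \<gamma> \<delta> \<in> ?Q \<rightarrow> - {0}"
    proof
      fix x assume x: "x \<in> ?Q"
      show "Fm \<gamma> \<delta> x \<in> -{0}"
      proof
        assume "Fm \<gamma> \<delta> x \<in> {0}"
        then have "x \<in> Z" using x Qsub by (auto simp: Z_def Fm_def cbox_complex_eq)
        then show False using nz x by (auto simp: cbox_complex_eq)
      qed
    qed
  qed
  then have "G a b = winding_number (Fm \<gamma> \<delta> \<circ> (\<lambda>_. \<i> * of_real a)) 0"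
    unfolding G_def by (rule winding_number_homotopic_loops)
  also have "\<dots> = 0"
  proof (rule winding_number_constI)
    show "Fm \<gamma> \<delta> (\<i> * of_real a) \<noteq> 0"
    proof
      assume "Fm \<gamma> \<delta> (\<i> * of_real a) = 0"
      then have "\<i> * of_real a \<in> Z" using a by (auto simp: Z_def Fm_def)
      then show False using nz ab by auto
    qed
  qed auto
  finally show ?thesis .
qed

end

lemma lp_nz: "0 < Im ((b - a) * cnj (b - z)) \<Longrightarrow> z \<notin> closed_segment a b"
  by (simp add: closed_segment_def) (force simp: algebra_simps)

lemma para_pos:
  fixes P1 P2 P3 P4 :: complex
  assumes h: "0 < Im ((P2 - P1) * cnj (P2 - 0))" "0 < Im ((P3 - P2) * cnj (P3 - 0))"
     "0 < Im ((P4 - P3) * cnj (P4 - 0))" "0 < Im ((P1 - P4) * cnj (P1 - 0))"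
  shows "winding_number (linepath P1 P2 +++ linepath P2 P3 +++ linepath P3 P4 +++ linepath P4 P1) 0 = 1"
proof -
  have znot[simp]: "0 \<notin> closed_segment P1 P2" "0 \<notin> closed_segment P2 P3"
     "0 \<notin> closed_segment P3 P4" "0 \<notin> closed_segment P4 P1"
    using h lp_nz by blast+
  have gt0: "0 < Re (winding_number (linepath P1 P2 +++ linepath P2 P3 +++ linepath P3 P4 +++ linepath P4 P1) 0)"
    using h by (simp add: winding_number_linepath_pos_lt path_image_join winding_number_join_pos_combined)
  have lt2: "Re (winding_number (linepath P1 P2 +++ linepath P2 P3 +++ linepath P3 P4 +++ linepath P4 P1) 0) < 2"
    using winding_number_lt_half_linepath [of _ P1 P2]
    using winding_number_lt_half_linepath [of _ P2 P3]
    using winding_number_lt_half_linepath [of _ P3 P4]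
    using winding_number_lt_half_linepath [of _ P4 P1] znot
    by (fastforce simp add: winding_number_join path_image_join)
  show ?thesis
    by (rule winding_number_eq_1) (simp_all add: path_image_join gt0 lt2)
qed

lemma para_neg:
  fixes P1 P2 P3 P4 :: complex
  assumes h: "0 < Im ((P1 - P2) * cnj (P1 - 0))" "0 < Im ((P2 - P3) * cnj (P2 - 0))"
     "0 < Im ((P3 - P4) * cnj (P3 - 0))" "0 < Im ((P4 - P1) * cnj (P4 - 0))"
  shows "winding_number (linepath P1 P2 +++ linepath P2 P3 +++ linepath P3 P4 +++ linepath P4 P1) 0 = -1"
proof -
  let ?g = "linepath P1 P2 +++ linepath P2 P3 +++ linepath P3 P4 +++ linepath P4 P1"
  have znot[simp]: "0 \<notin> closed_segment P2 P1" "0 \<notin> closed_segment P3 P2"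
     "0 \<notin> closed_segment P4 P3" "0 \<notin> closed_segment P1 P4"
    using h lp_nz by blast+
  then have znot2[simp]: "0 \<notin> closed_segment P1 P2" "0 \<notin> closed_segment P2 P3"
     "0 \<notin> closed_segment P3 P4" "0 \<notin> closed_segment P4 P1"
    by (simp_all add: closed_segment_commute)
  have w: "winding_number ?g 0 = winding_number (linepath P1 P2) 0 + winding_number (linepath P2 P3) 0
     + winding_number (linepath P3 P4) 0 + winding_number (linepath P4 P1) 0"
    by (simp add: winding_number_join path_image_join)
  have n: "Re (winding_number (linepath P1 P2) 0) < 0" "Re (winding_number (linepath P2 P3) 0) < 0"
     "Re (winding_number (linepath P3 P4) 0) < 0" "Re (winding_number (linepath P4 P1) 0) < 0"
    using h by (simp_all add: winding_number_linepath_neg_lt)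
  have l: "\<bar>Re (winding_number (linepath P1 P2) 0)\<bar> < 1/2" "\<bar>Re (winding_number (linepath P2 P3) 0)\<bar> < 1/2"
     "\<bar>Re (winding_number (linepath P3 P4) 0)\<bar> < 1/2" "\<bar>Re (winding_number (linepath P4 P1) 0)\<bar> < 1/2"
    using winding_number_lt_half_linepath znot2 by blast+
  have "winding_number ?g 0 \<in> \<int>"
    by (rule integer_winding_number) (simp_all add: path_image_join)
  then obtain k where k: "winding_number ?g 0 = of_int k" by (auto elim: Ints_cases)
  have "Re (winding_number ?g 0) < 0" "-2 < Re (winding_number ?g 0)" using w n l by auto
  then have "k = -1" using k by simp
  then show ?thesis using k by simp
qed

lemma lowerA:
  fixes u v :: complex and x y :: real
  shows "\<bar>Im (cnj u * v)\<bar> * (\<bar>x\<bar> + \<bar>y\<bar>) \<le> (norm u + norm v) * norm (of_real x * u - of_real y * v)"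
proof -
  define \<sigma> where "\<sigma> = Im (cnj u * v)"
  define X where "X = of_real x * u - of_real y * v"
  have 1: "Im (cnj u * X) = - y * \<sigma>" by (simp add: X_def \<sigma>_def algebra_simps)
  have 2: "Im (cnj v * X) = - x * \<sigma>" by (simp add: X_def \<sigma>_def algebra_simps)
  have "\<bar>Im (cnj u * X)\<bar> \<le> norm u * norm X"
    by (metis abs_Im_le_cmod complex_mod_cnj norm_mult)
  then have A1: "\<bar>y\<bar> * \<bar>\<sigma>\<bar> \<le> norm u * norm X" unfolding 1 by (simp add: abs_mult)
  have "\<bar>Im (cnj v * X)\<bar> \<le> norm v * norm X"
    by (metis abs_Im_le_cmod complex_mod_cnj norm_mult)
  then have A2: "\<bar>x\<bar> * \<bar>\<sigma>\<bar> \<le> norm v * norm X" unfolding 2 by (simp add: abs_mult)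
  have "\<bar>\<sigma>\<bar> * (\<bar>x\<bar> + \<bar>y\<bar>) = \<bar>x\<bar> * \<bar>\<sigma>\<bar> + \<bar>y\<bar> * \<bar>\<sigma>\<bar>" by (simp add: algebra_simps)
  moreover have "(norm u + norm v) * norm X = norm u * norm X + norm v * norm X" by (simp add: algebra_simps)
  ultimately show ?thesis using A1 A2 unfolding \<sigma>_def X_def by linarith
qed

context two_curves begin

lemma G_one:
  assumes a: "a \<in> {0..1}" and b: "b \<in> {0..1}" and z: "z \<in> Z" and az: "a < Im z" and zb: "Im z < b"
    and uniq: "\<forall>x\<in>Z. a \<le> Im x \<and> Im x \<le> b \<longrightarrow> x = z"
  shows "G a b = 1 \<or> G a b = -1"
proof -
  define s0 where "s0 = Re z"
  define t0 where "t0 = Im z"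
  have zi: "0 < s0" "s0 < 1" using Z_interior[OF z] by (auto simp: s0_def)
  have st: "s0 \<in> {0..1}" "t0 \<in> {0..1}" "\<gamma> s0 = \<delta> t0" using z by (auto simp: Z_def s0_def t0_def)
  obtain u v where du: "(\<gamma> has_vector_derivative u) (at s0 within {0..1})"
      and dv: "(\<delta> has_vector_derivative v) (at t0 within {0..1})" and sg: "Im (cnj u * v) \<noteq> 0"
    using tr[OF st] by blast
  define \<sigma> where "\<sigma> = Im (cnj u * v)"
  define \<tau> where "\<tau> = Im (u * cnj v)"
  have \<tau>: "\<tau> = - \<sigma>" by (simp add: \<tau>_def \<sigma>_def algebra_simps)
  have unz: "u \<noteq> 0" "v \<noteq> 0" using sg by auto
  define M where "M = norm u + norm v"
  have M: "M > 0" using unz by (simp add: M_def add_pos_pos)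
  define e where "e = \<bar>\<sigma>\<bar> / (4*M)"
  have e: "e > 0" using sg M by (simp add: e_def \<sigma>_def)
  obtain d1 where d1: "d1 > 0" and d1': "\<And>y. y \<in> {0..1} \<Longrightarrow> norm (y - s0) < d1 \<Longrightarrow>
      norm (\<gamma> y - \<gamma> s0 - (y - s0) *\<^sub>R u) \<le> e * norm (y - s0)"
    using du e unfolding has_vector_derivative_def has_derivative_within_alt by meson
  obtain d2 where d2: "d2 > 0" and d2': "\<And>y. y \<in> {0..1} \<Longrightarrow> norm (y - t0) < d2 \<Longrightarrow>
      norm (\<delta> y - \<delta> t0 - (y - t0) *\<^sub>R v) \<le> e * norm (y - t0)"
    using dv e unfolding has_vector_derivative_def has_derivative_within_alt by meson
  define r where "r = min (1/2) (min d1 d2 / 2)"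
  have r: "0 < r" "r \<le> 1/2" "r < d1" "r < d2" using d1 d2 by (auto simp: r_def)
  let ?Q = "cbox (\<i> * of_real a) (1 + \<i> * of_real b)"
  have ab: "a \<le> b" using az zb by simp
  have Qsub: "?Q \<subseteq> cbox 0 (1 + \<i>)" using a b by (auto simp: cbox_complex_eq)
  have zQ: "z \<in> ?Q" using az zb zi by (auto simp: cbox_complex_eq s0_def)
  define R where "R = rloop a b"
  have RQ: "\<And>t. t \<in> {0..1} \<Longrightarrow> R t \<in> ?Q" using rloop_image_box[OF ab] by (auto simp: R_def path_image_def)
  have Rz: "R t \<noteq> z" if t: "t \<in> {0..1}" for t
  proof
    assume "R t = z"
    then have "z \<in> path_image (rloop a b)" using t by (auto simp: R_def path_image_def)
    then show False using rloop_image_bd[of a b] zi az zb by (auto simp: s0_def)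
  qed
  define Rl where "Rl = (\<lambda>t. z + of_real r * (R t - z))"
  have convQ: "z + of_real \<kappa> * (p - z) \<in> ?Q" if "p \<in> ?Q" "0 \<le> \<kappa>" "\<kappa> \<le> 1" for p \<kappa>
  proof -
    have "(1 - \<kappa>) *\<^sub>R z + \<kappa> *\<^sub>R p \<in> ?Q" using zQ that by (intro convexD[OF convex_box(1)]) auto
    moreover have "(1 - \<kappa>) *\<^sub>R z + \<kappa> *\<^sub>R p = z + of_real \<kappa> * (p - z)"
      by (simp add: scaleR_conv_of_real algebra_simps)
    ultimately show ?thesis by simp
  qed
  have pR: "path R" "pathfinish R = pathstart R" using path_rloop closed_rloop by (auto simp: R_def)
  have pRl: "path Rl" "pathfinish Rl = pathstart Rl"
    using pR unfolding Rl_def path_def pathstart_def pathfinish_def by (auto intro!: continuous_intros)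
  have H1: "homotopic_loops (?Q - {z}) R Rl"
  proof (rule homotopic_loops_linear[OF pR(1) pRl(1) pR(2) pRl(2)])
    fix t :: real assume t: "t \<in> {0..1}"
    show "closed_segment (R t) (Rl t) \<subseteq> ?Q - {z}"
    proof
      fix y assume "y \<in> closed_segment (R t) (Rl t)"
      then obtain \<mu> where \<mu>: "0 \<le> \<mu>" "\<mu> \<le> 1" "y = (1 - \<mu>) *\<^sub>R R t + \<mu> *\<^sub>R Rl t"
        by (auto simp: closed_segment_def)
      define \<kappa> where "\<kappa> = 1 - \<mu> + \<mu> * r"
      have "0 \<le> \<mu> * r" "\<mu> * r \<le> \<mu>" using \<mu> r by (auto simp: mult_left_le)
      have \<kappa>1: "0 < \<kappa>"
      proof (cases "\<mu> < 1")
        case True then show ?thesis using \<open>0 \<le> \<mu> * r\<close> unfolding \<kappa>_def by linarith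
      next
        case False then have "\<mu> = 1" using \<mu> by simp
        then show ?thesis using r unfolding \<kappa>_def by simp
      qed
      have \<kappa>2: "\<kappa> \<le> 1" using \<open>\<mu> * r \<le> \<mu>\<close> unfolding \<kappa>_def by linarith
      note \<kappa> = \<kappa>1 \<kappa>2
      have yeq: "y = z + of_real \<kappa> * (R t - z)"
        using \<mu>(3) by (simp add: Rl_def \<kappa>_def scaleR_conv_of_real algebra_simps)
      have "y \<noteq> z" using yeq \<kappa>(1) Rz[OF t] by auto
      then show "y \<in> ?Q - {z}" using convQ[OF RQ[OF t] _ \<kappa>(2)] \<kappa>(1) yeq by auto
    qed
  qed
  have F_nz: "Fm \<gamma> \<delta> \<in> ?Q - {z} \<rightarrow> -{0}"
  proof
    fix x assume x: "x \<in> ?Q - {z}"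
    show "Fm \<gamma> \<delta> x \<in> -{0}"
    proof
      assume "Fm \<gamma> \<delta> x \<in> {0}"
      then have "x \<in> Z" using x Qsub by (auto simp: Z_def Fm_def cbox_complex_eq)
      then show False using uniq x by (auto simp: cbox_complex_eq)
    qed
  qed
  have H2: "homotopic_loops (-{0}) (Fm \<gamma> \<delta> \<circ> R) (Fm \<gamma> \<delta> \<circ> Rl)"
    by (rule homotopic_loops_continuous_image[OF H1 continuous_on_Fm[OF pg pd] F_nz]) (use Qsub in auto)
  define A where "A = (\<lambda>w. of_real (Re (w - z)) * u - of_real (Im (w - z)) * v)"
  have pA: "path (A \<circ> Rl)" "pathfinish (A \<circ> Rl) = pathstart (A \<circ> Rl)"
    using pRl unfolding A_def path_def pathstart_def pathfinish_def o_def by (auto intro!: continuous_intros)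
  have pF: "path (Fm \<gamma> \<delta> \<circ> Rl)" "pathfinish (Fm \<gamma> \<delta> \<circ> Rl) = pathstart (Fm \<gamma> \<delta> \<circ> Rl)"
    using homotopic_loops_imp_path[OF H2] homotopic_loops_imp_loop[OF H2] by auto
  have est: "norm (Fm \<gamma> \<delta> (Rl t) - A (Rl t)) < norm (A (Rl t))" if t: "t \<in> {0..1}" for t
  proof -
    define p where "p = R t"
    have pQ: "p \<in> ?Q" and pz: "p \<noteq> z" using RQ[OF t] Rz[OF t] by (auto simp: p_def)
    define ds where "ds = r * (Re p - s0)"
    define dt where "dt = r * (Im p - t0)"
    have w: "Re (Rl t) = s0 + ds" "Im (Rl t) = t0 + dt"
      by (simp_all add: Rl_def p_def ds_def dt_def s0_def t0_def algebra_simps)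
    have wQ: "Rl t \<in> ?Q" unfolding Rl_def using convQ[OF RQ[OF t]] r by simp
    have ins: "s0 + ds \<in> {0..1}" "t0 + dt \<in> {0..1}" using wQ w a b by (auto simp: cbox_complex_eq)
    have pb: "Re p \<in> {0..1}" "Im p \<in> {a..b}" using pQ by (auto simp: cbox_complex_eq)
    have "\<bar>Re p - s0\<bar> \<le> 1" using pb st by auto
    then have "r * \<bar>Re p - s0\<bar> \<le> r" using r by (simp add: mult_left_le)
    moreover have "\<bar>ds\<bar> = r * \<bar>Re p - s0\<bar>" using r by (simp add: ds_def abs_mult)
    ultimately have dsb: "\<bar>ds\<bar> < d1" using r by linarith
    have "\<bar>Im p - t0\<bar> \<le> 1" using pb st a b by auto
    then have "r * \<bar>Im p - t0\<bar> \<le> r" using r by (simp add: mult_left_le)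
    moreover have "\<bar>dt\<bar> = r * \<bar>Im p - t0\<bar>" using r by (simp add: dt_def abs_mult)
    ultimately have dtb: "\<bar>dt\<bar> < d2" using r by linarith
    have nz: "0 < \<bar>ds\<bar> + \<bar>dt\<bar>"
    proof (rule ccontr)
      assume "\<not> 0 < \<bar>ds\<bar> + \<bar>dt\<bar>"
      then have "ds = 0" "dt = 0" by auto
      then have "Re p = Re z" "Im p = Im z" using r by (auto simp: ds_def dt_def s0_def t0_def)
      then show False using pz complex_eqI by blast
    qed
    have Aw: "A (Rl t) = of_real ds * u - of_real dt * v" by (simp add: A_def w s0_def t0_def)
    have Fw: "Fm \<gamma> \<delta> (Rl t) = \<gamma> (s0 + ds) - \<delta> (t0 + dt)" by (simp add: Fm_def w)
    have e1: "norm (\<gamma> (s0 + ds) - \<gamma> s0 - ds *\<^sub>R u) \<le> e * \<bar>ds\<bar>" using d1'[OF ins(1)] dsb by simp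
    have e2: "norm (\<delta> (t0 + dt) - \<delta> t0 - dt *\<^sub>R v) \<le> e * \<bar>dt\<bar>" using d2'[OF ins(2)] dtb by simp
    have eqd: "Fm \<gamma> \<delta> (Rl t) - A (Rl t) = (\<gamma> (s0 + ds) - \<gamma> s0 - ds *\<^sub>R u) - (\<delta> (t0 + dt) - \<delta> t0 - dt *\<^sub>R v)"
      using st(3) by (simp add: Fw Aw scaleR_conv_of_real)
    have "norm (Fm \<gamma> \<delta> (Rl t) - A (Rl t)) \<le> e * \<bar>ds\<bar> + e * \<bar>dt\<bar>"
      unfolding eqd using norm_triangle_ineq4[of "\<gamma> (s0 + ds) - \<gamma> s0 - ds *\<^sub>R u" "\<delta> (t0 + dt) - \<delta> t0 - dt *\<^sub>R v"] e1 e2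
      by linarith
    also have "\<dots> = (\<bar>\<sigma>\<bar> * (\<bar>ds\<bar> + \<bar>dt\<bar>) / M) / 4"
      using M unfolding e_def by (simp add: field_simps)
    also have "\<dots> < \<bar>\<sigma>\<bar> * (\<bar>ds\<bar> + \<bar>dt\<bar>) / M"
    proof -
      have "0 < \<bar>\<sigma>\<bar>" using sg by (simp add: \<sigma>_def)
      then have "0 < \<bar>\<sigma>\<bar> * (\<bar>ds\<bar> + \<bar>dt\<bar>) / M" using nz M by simp
      moreover have "\<And>c::real. 0 < c \<Longrightarrow> c / 4 < c" by auto
      ultimately show ?thesis by blast
    qed
    also have "\<dots> \<le> norm (A (Rl t))"
    proof -
      have "\<bar>\<sigma>\<bar> * (\<bar>ds\<bar> + \<bar>dt\<bar>) \<le> M * norm (A (Rl t))"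
        using lowerA[of u v ds dt] unfolding Aw \<sigma>_def M_def .
      then show ?thesis using M by (simp add: pos_divide_le_eq mult.commute)
    qed
    finally show ?thesis .
  qed
  have H3: "homotopic_loops (-{0}) (A \<circ> Rl) (Fm \<gamma> \<delta> \<circ> Rl)"
  proof (rule homotopic_loops_nearby_explicit[OF pA(1) pF(1) pA(2) pF(2)])
    fix t :: real and x :: complex assume t: "t \<in> {0..1}" and x: "x \<notin> - {0::complex}"
    then have "x = 0" by simp
    then show "norm ((Fm \<gamma> \<delta> \<circ> Rl) t - (A \<circ> Rl) t) < norm ((A \<circ> Rl) t - x)"
      using est[OF t] by simp
  qed
  define \<Phi> where "\<Phi> = (\<lambda>w. of_real r * (of_real (Re (w - z)) * u - of_real (Im (w - z)) * v))"
  have ARl: "A \<circ> Rl = \<Phi> \<circ> R" unfolding A_def \<Phi>_def Rl_def by (rule ext) (simp add: algebra_simps)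
  have \<Phi>lp: "\<Phi> \<circ> linepath p q = linepath (\<Phi> p) (\<Phi> q)" for p q
    by (rule ext) (simp add: \<Phi>_def linepath_def scaleR_conv_of_real algebra_simps)
  define P1 where "P1 = \<Phi> (\<i> * of_real a)"
  define P2 where "P2 = \<Phi> (1 + \<i> * of_real a)"
  define P3 where "P3 = \<Phi> (1 + \<i> * of_real b)"
  define P4 where "P4 = \<Phi> (\<i> * of_real b)"
  have \<Phi>R: "\<Phi> \<circ> R = linepath P1 P2 +++ linepath P2 P3 +++ linepath P3 P4 +++ linepath P4 P1"
    unfolding R_def rloop_def path_compose_join \<Phi>lp P1_def P2_def P3_def P4_def ..
  have "G a b = winding_number (Fm \<gamma> \<delta> \<circ> R) 0" by (simp add: G_def R_def)
  also have "\<dots> = winding_number (Fm \<gamma> \<delta> \<circ> Rl) 0" by (rule winding_number_homotopic_loops[OF H2])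
  also have "\<dots> = winding_number (A \<circ> Rl) 0" by (rule winding_number_homotopic_loops[OF H3, symmetric])
  also have "\<dots> = winding_number (\<Phi> \<circ> R) 0" by (simp only: ARl)
  finally have G: "G a b = winding_number (linepath P1 P2 +++ linepath P2 P3 +++ linepath P3 P4 +++ linepath P4 P1) 0"
    by (simp only: \<Phi>R)
  have q1: "Im ((P2 - P1) * cnj (P2 - 0)) = r^2 * (t0 - a) * \<tau>"
    by (simp add: P1_def P2_def \<Phi>_def \<tau>_def s0_def t0_def algebra_simps power2_eq_square)
  have q2: "Im ((P3 - P2) * cnj (P3 - 0)) = r^2 * ((b - a) * (1 - s0)) * \<tau>"
    by (simp add: P3_def P2_def \<Phi>_def \<tau>_def s0_def t0_def algebra_simps power2_eq_square)
  have q3: "Im ((P4 - P3) * cnj (P4 - 0)) = r^2 * (b - t0) * \<tau>"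
    by (simp add: P3_def P4_def \<Phi>_def \<tau>_def s0_def t0_def algebra_simps power2_eq_square)
  have q4: "Im ((P1 - P4) * cnj (P1 - 0)) = r^2 * ((b - a) * s0) * \<tau>"
    by (simp add: P1_def P4_def \<Phi>_def \<tau>_def s0_def t0_def algebra_simps power2_eq_square)
  have n1: "Im ((P1 - P2) * cnj (P1 - 0)) = r^2 * (t0 - a) * (-\<tau>)"
    by (simp add: P1_def P2_def \<Phi>_def \<tau>_def s0_def t0_def algebra_simps power2_eq_square)
  have n2: "Im ((P2 - P3) * cnj (P2 - 0)) = r^2 * ((b - a) * (1 - s0)) * (-\<tau>)"
    by (simp add: P3_def P2_def \<Phi>_def \<tau>_def s0_def t0_def algebra_simps power2_eq_square)
  have n3: "Im ((P3 - P4) * cnj (P3 - 0)) = r^2 * (b - t0) * (-\<tau>)"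
    by (simp add: P3_def P4_def \<Phi>_def \<tau>_def s0_def t0_def algebra_simps power2_eq_square)
  have n4: "Im ((P4 - P1) * cnj (P4 - 0)) = r^2 * ((b - a) * s0) * (-\<tau>)"
    by (simp add: P1_def P4_def \<Phi>_def \<tau>_def s0_def t0_def algebra_simps power2_eq_square)
  have pos: "0 < r^2" "0 < t0 - a" "0 < (b - a) * (1 - s0)" "0 < b - t0" "0 < (b - a) * s0"
    using r az zb zi by (auto simp: t0_def)
  have "\<tau> \<noteq> 0" using sg \<tau> by (simp add: \<sigma>_def)
  then consider "0 < \<tau>" | "0 < - \<tau>" by linarith
  then show ?thesis
  proof cases
    case 1
    then have "G a b = 1" unfolding G
      by (intro para_pos) (simp_all only: q1 q2 q3 q4 mult_pos_pos pos)
    then show ?thesis ..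
  next
    case 2
    then have "G a b = -1" unfolding G
      by (intro para_neg) (simp_all only: n1 n2 n3 n4 mult_pos_pos pos)
    then show ?thesis ..
  qed
qed

end

context two_curves begin

lemma G_count:
  assumes "a \<in> {0..1}" "b \<in> {0..1}" "a \<le> b" "\<forall>x\<in>Z. Im x \<noteq> a \<and> Im x \<noteq> b"
  shows "\<exists>j::int. G a b = of_int (int (card {x\<in>Z. a < Im x \<and> Im x < b}) + 2*j)"
  using assms
proof (induction "card {x\<in>Z. a < Im x \<and> Im x < b}" arbitrary: a rule: less_induct)
  case (less a)
  define S where "S = {x\<in>Z. a < Im x \<and> Im x < b}"
  have finS: "finite S" using finZ by (simp add: S_def)
  show ?case
  proof (cases "S = {}")
    case True
    have "G a b = 0"
    proof (rule G_empty)
      show "\<forall>x\<in>Z. \<not> (a \<le> Im x \<and> Im x \<le> b)"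
        using True less.prems(4) by (force simp: S_def)
    qed (use less.prems in auto)
    then show ?thesis using True by (auto simp: S_def[symmetric] intro: exI[of _ 0])
  next
    case False
    define t1 where "t1 = Min (Im ` S)"
    have "t1 \<in> Im ` S" using False finS by (simp add: t1_def)
    then obtain x1 where x1: "x1 \<in> S" "Im x1 = t1" by auto
    have t1min: "\<forall>x\<in>S. t1 \<le> Im x" using finS by (simp add: t1_def)
    define b' where "b' = Min (insert b (Im ` (S - {x1})))"
    have fin': "finite (insert b (Im ` (S - {x1})))" using finS by simp
    have gt: "\<forall>y\<in>insert b (Im ` (S - {x1})). t1 < y"
    proof
      fix y assume "y \<in> insert b (Im ` (S - {x1}))"
      then consider "y = b" | x where "x \<in> S" "x \<noteq> x1" "y = Im x" by auto
      then show "t1 < y"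
      proof cases
        case 1 then show ?thesis using x1 by (auto simp: S_def)
      next
        case 2
        then have "Im x \<noteq> t1" using x1 Z_inj_Im by (auto simp: S_def)
        then show ?thesis using 2 t1min by force
      qed
    qed
    have t1b': "t1 < b'" unfolding b'_def using fin' gt by (simp add: Min_gr_iff)
    have b'b: "b' \<le> b" unfolding b'_def using fin' by simp
    have b'S: "\<forall>x\<in>S - {x1}. b' \<le> Im x" unfolding b'_def using fin' by simp
    define c where "c = (t1 + b') / 2"
    have c: "t1 < c" "c < b'" using t1b' by (auto simp: c_def)
    have at1: "a < t1" using x1 by (auto simp: S_def)
    have cin: "c \<in> {0..1}" using less.prems c at1 b'b by auto
    have nzc: "\<forall>x\<in>Z. Im x \<noteq> c"
    proof
      fix x assume x: "x \<in> Z"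
      show "Im x \<noteq> c"
      proof
        assume h: "Im x = c"
        then have "x \<in> S" using x c at1 b'b by (auto simp: S_def)
        then show False
        proof (cases "x = x1")
          case True then show False using h x1 c by simp
        next
          case False then show False using b'S \<open>x \<in> S\<close> h c by force
        qed
      qed
    qed
    have split: "G a b = G a c + G c b"
      by (rule G_add) (use less.prems cin nzc in auto)
    have one: "G a c = 1 \<or> G a c = -1"
    proof (rule G_one)
      show "x1 \<in> Z" "a < Im x1" "Im x1 < c" using x1 c by (auto simp: S_def)
      show "\<forall>x\<in>Z. a \<le> Im x \<and> Im x \<le> c \<longrightarrow> x = x1"
      proof (intro ballI impI)
        fix x assume x: "x \<in> Z" "a \<le> Im x \<and> Im x \<le> c"
        then have "x \<in> S" using less.prems(4) c b'b by (force simp: S_def)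
        show "x = x1"
        proof (rule ccontr)
          assume "x \<noteq> x1"
          then show False using b'S \<open>x \<in> S\<close> x c by force
        qed
      qed
    qed (use less.prems cin in auto)
    have S': "{x\<in>Z. c < Im x \<and> Im x < b} = S - {x1}"
    proof
      show "{x\<in>Z. c < Im x \<and> Im x < b} \<subseteq> S - {x1}" using c at1 x1 by (auto simp: S_def)
      show "S - {x1} \<subseteq> {x\<in>Z. c < Im x \<and> Im x < b}" using b'S c by (force simp: S_def)
    qed
    have lt: "card {x\<in>Z. c < Im x \<and> Im x < b} < card S"
      unfolding S' by (rule card_Diff1_less[OF finS x1(1)])
    obtain j where j: "G c b = of_int (int (card {x\<in>Z. c < Im x \<and> Im x < b}) + 2*j)"
      using less.hyps[OF lt[unfolded S_def]] cin less.prems nzc c b'b by force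
    have cS: "card {x\<in>Z. c < Im x \<and> Im x < b} = card S - 1" unfolding S' using finS x1 by simp
    have cpos: "card S \<ge> 1" using finS x1(1) card_gt_0_iff by (metis Suc_leI One_nat_def empty_iff)
    from one show ?thesis
    proof
      assume "G a c = 1"
      then have "G a b = of_int (int (card S) + 2*j)"
        using split j cS cpos by (simp add: of_nat_diff)
      then show ?thesis unfolding S_def by blast
    next
      assume "G a c = -1"
      then have "G a b = of_int (int (card S) + 2*(j - 1))"
        using split j cS cpos by (simp add: of_nat_diff algebra_simps)
      then show ?thesis unfolding S_def by blast
    qed
  qed
qed

lemma core:
  "\<exists>j::int. winding_number \<gamma> (\<delta> 0) + winding_number (\<lambda>t. \<gamma> 1 - \<delta> t) 0
     - winding_number \<gamma> (\<delta> 1) - winding_number (\<lambda>t. \<gamma> 0 - \<delta> t) 0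
     = of_int (int (card (path_image \<gamma> \<inter> path_image \<delta>)) + 2*j)"
proof -
  have nz: "\<forall>x\<in>Z. Im x \<noteq> 0 \<and> Im x \<noteq> 1" using Z_interior by fastforce
  have G01: "G 0 1 = winding_number \<gamma> (\<delta> 0) + ws (\<gamma> 1) 0 1 - winding_number \<gamma> (\<delta> 1) - ws (\<gamma> 0) 0 1"
    by (rule G_dec) (use nz in auto)
  have Zeq: "{x\<in>Z. 0 < Im x \<and> Im x < 1} = Z" using Z_interior by auto
  obtain j where Gj: "G 0 1 = of_int (int (card {x\<in>Z. 0 < Im x \<and> Im x < 1}) + 2*j)"
    using G_count[of 0 1] nz by auto
  have "winding_number \<gamma> (\<delta> 0) + winding_number (\<lambda>t. \<gamma> 1 - \<delta> t) 0
     - winding_number \<gamma> (\<delta> 1) - winding_number (\<lambda>t. \<gamma> 0 - \<delta> t) 0 = G 0 1"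
    using G01 by (simp add: ws_def)
  also have "\<dots> = of_int (int (card (path_image \<gamma> \<inter> path_image \<delta>)) + 2*j)"
    using Gj Zeq cardZ by simp
  finally show ?thesis by blast
qed

end

lemma smooth_valid: assumes "smooth_curve \<gamma>" shows "valid_path \<gamma>"
proof -
  obtain D where D: "\<forall>t\<in>{0..1}. (\<gamma> has_vector_derivative D t) (at t within {0..1})" "continuous_on {0..1} D"
    using assms unfolding smooth_curve_def by blast
  have c: "continuous_on {0..1} \<gamma>" using D(1) by (intro continuous_on_vector_derivative) auto
  have "\<gamma> C1_differentiable_on ({0..1} - {0,1})"
    unfolding C1_differentiable_on_def
  proof (intro exI conjI ballI)
    fix x :: real assume x: "x \<in> {0..1} - {0,1}"
    then have "0 < x" "x < 1" by auto
    then have "at x within {0..1} = at x" by (rule at_within_Icc_at)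
    then show "(\<gamma> has_vector_derivative D x) (at x)" using D(1) x by force
  next
    show "continuous_on ({0..1} - {0,1}) D" using D(2) continuous_on_subset by blast
  qed
  then show ?thesis unfolding valid_path_def piecewise_C1_differentiable_on_def using c
    by (intro conjI exI[of _ "{0,1}"]) auto
qed

lemma wneg: assumes "valid_path \<delta>" "c \<notin> path_image \<delta>"
  shows "winding_number (\<lambda>t. c - \<delta> t) 0 = winding_number \<delta> c"
proof -
  have "(\<lambda>t. \<delta> t - c) = (+) (-c) \<circ> \<delta>" by (auto simp: o_def)
  then have vp: "valid_path (\<lambda>t. \<delta> t - c)" using valid_path_translation_eq[of "-c" \<delta>] assms(1) by simp
  have nz: "0 \<notin> path_image (\<lambda>t. \<delta> t - c)" using assms(2) by (auto simp: path_image_def)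
  have "(\<lambda>t. c - \<delta> t) = uminus \<circ> (\<lambda>t. \<delta> t - c)" by auto
  then have "winding_number (\<lambda>t. c - \<delta> t) 0 = winding_number (\<lambda>t. \<delta> t - c) 0"
    using winding_number_negatepath[OF vp nz] by simp
  also have "\<dots> = winding_number \<delta> c" by (rule winding_number_offset[symmetric])
  finally show ?thesis .
qed

definition Lg :: "complex \<Rightarrow> complex \<Rightarrow> complex \<Rightarrow> complex" where
  "Lg p0 p1 q = (Ln (p1 - q) - Ln (p0 - q)) / (2 * of_real pi * \<i>)"

lemma Lg_mult: "(2 * of_real pi * \<i>) * Lg p0 p1 q = Ln (p1 - q) - Ln (p0 - q)"
proof -
  have pi: "2 * of_real pi * \<i> \<noteq> (0::complex)" by simp
  show ?thesis unfolding Lg_def by (simp only: times_divide_eq_right nonzero_mult_div_cancel_left[OF pi])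
qed

lemma K_int: assumes "path g" "q \<notin> path_image g"
  shows "winding_number g q - Lg (g 0) (g 1) q \<in> \<int>"
proof -
  have e: "g 1 - q = exp (2 * of_real pi * \<i> * winding_number g q) * (g 0 - q)"
    using winding_number_exp_2pi[OF assms] by (simp add: pathstart_def pathfinish_def)
  have nz: "g 0 - q \<noteq> 0" "g 1 - q \<noteq> 0" using assms(2) by (auto simp: path_image_def)
  define K where "K = winding_number g q - Lg (g 0) (g 1) q"
  have "2 * of_real pi * \<i> * K = 2 * of_real pi * \<i> * winding_number g q - (Ln (g 1 - q) - Ln (g 0 - q))"
    by (simp only: K_def right_diff_distrib Lg_mult)
  then have "exp (2 * of_real pi * \<i> * K) = exp (2 * of_real pi * \<i> * winding_number g q) / exp (Ln (g 1 - q) - Ln (g 0 - q))"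
    by (simp add: exp_diff)
  also have "\<dots> = 1" using nz e by (simp add: exp_diff)
  finally have "exp (2 * of_real pi * \<i> * K) = 1" .
  then obtain n :: int where n: "Re (2 * of_real pi * \<i> * K) = 0" "Im (2 * of_real pi * \<i> * K) = of_int (2 * n) * pi"
    unfolding exp_eq_1 by blast
  then have "Im K = 0" "Re K = of_int n" by auto
  then have "K = of_int n" by (simp add: complex_eq_iff)
  then show ?thesis unfolding K_def by simp
qed

definition kint :: "(real \<Rightarrow> complex) \<Rightarrow> complex \<Rightarrow> int" where
  "kint g q = \<lfloor>Re (winding_number g q - Lg (g 0) (g 1) q)\<rfloor>"

lemma kint_eq: assumes "path g" "q \<notin> path_image g"
  shows "of_int (kint g q) = winding_number g q - Lg (g 0) (g 1) q"
proof -
  obtain n where n: "winding_number g q - Lg (g 0) (g 1) q = of_int n" using K_int[OF assms] Ints_cases by metis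
  then show ?thesis by (simp add: kint_def)
qed

definition nn :: "complex \<Rightarrow> complex \<Rightarrow> int" where
  "nn x y = (if Arg (x - y) \<le> 0 then 1 else 0)"

lemma T_lemma: assumes "x \<noteq> y" shows "Ln (x - y) - Ln (y - x) = \<i> * of_real pi * of_int (1 - 2 * nn x y)"
proof -
  have w: "x - y \<noteq> 0" using assms by simp
  have m: "y - x = - (x - y)" by simp
  have "Ln (x - y) - Ln (y - x) = \<i> * of_real (Arg (x - y) - Arg (- (x - y)))"
    unfolding m using w by (simp add: Ln_Arg algebra_simps norm_minus_commute)
  also have "\<dots> = \<i> * of_real pi * of_int (1 - 2 * nn x y)"
    using Arg_minus[OF w] by (simp add: nn_def)
  finally show ?thesis .
qed

lemma nn_sym: assumes "x \<noteq> y" shows "nn x y + nn y x = 1"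
proof -
  have w: "x - y \<noteq> 0" using assms by simp
  have m: "y - x = - (x - y)" by simp
  show ?thesis using Arg_minus[OF w] Arg_bounded[of "x - y"] unfolding nn_def m by auto
qed

locale emb =
  fixes V :: "'v set" and E :: "'v set set" and pos :: "'v \<Rightarrow> complex" and crv :: "'v set \<Rightarrow> real \<Rightarrow> complex"
  assumes sg: "simple_graph V E" and pe: "proper_embedding V E pos crv"
begin

lemma injpos: "inj_on pos V" using pe by (simp add: proper_embedding_def embedding_def)
lemma edge: "e \<in> E \<Longrightarrow> e \<subseteq> V \<and> card e = 2" using sg by (simp add: simple_graph_def)
lemma finV: "finite V" using sg by (simp add: simple_graph_def)
lemma smooth: "e \<in> E \<Longrightarrow> smooth_curve (crv e)" using pe by (simp add: proper_embedding_def embedding_def)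
lemma injc: "e \<in> E \<Longrightarrow> inj_on (crv e) {0..1}" using pe by (simp add: proper_embedding_def embedding_def)
lemma ends: "e \<in> E \<Longrightarrow> {crv e 0, crv e 1} = pos ` e" using pe by (simp add: proper_embedding_def embedding_def)
lemma interior: "e \<in> E \<Longrightarrow> t \<in> {0<..<1} \<Longrightarrow> crv e t \<notin> pos ` V"
  using pe by (simp add: proper_embedding_def embedding_def)
lemma valid_e: "e \<in> E \<Longrightarrow> valid_path (crv e)" using smooth smooth_valid by blast
lemma path_e: "e \<in> E \<Longrightarrow> path (crv e)" using valid_e valid_path_imp_path by blast

lemma edge_ends:
  assumes "e \<in> E"
  obtains a b where "e = {a,b}" "a \<noteq> b" "a \<in> V" "b \<in> V" "crv e 0 = pos a" "crv e 1 = pos b"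
proof -
  have "card e = 2" using edge[OF assms] by simp
  then obtain x y where xy: "e = {x,y}" "x \<noteq> y" unfolding card_2_iff by blast
  have V: "x \<in> V" "y \<in> V" using edge[OF assms] xy by auto
  have ne: "crv e 0 \<noteq> crv e 1"
  proof
    assume "crv e 0 = crv e 1"
    then have "(0::real) = 1" using injc[OF assms] by (auto dest: inj_onD)
    then show False by simp
  qed
  have eq: "{crv e 0, crv e 1} = {pos x, pos y}" using ends[OF assms] xy by simp
  then have "(crv e 0 = pos x \<and> crv e 1 = pos y) \<or> (crv e 0 = pos y \<and> crv e 1 = pos x)"
    by (simp add: doubleton_eq_iff)
  then show ?thesis
  proof
    assume "crv e 0 = pos x \<and> crv e 1 = pos y"
    then show ?thesis using that[of x y] xy V by auto
  next
    assume "crv e 0 = pos y \<and> crv e 1 = pos x"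
    then show ?thesis using that[of y x] xy V by (auto simp: insert_commute)
  qed
qed

lemma endpt_not_on:
  assumes "e \<in> E" "f \<in> E" "a \<in> e" "a \<notin> f" shows "pos a \<notin> path_image (crv f)"
proof
  assume "pos a \<in> path_image (crv f)"
  then obtain t where t: "t \<in> {0..1}" "crv f t = pos a" by (auto simp: path_image_def)
  have aV: "a \<in> V" using edge[OF assms(1)] assms(3) by auto
  show False
  proof (cases "t = 0 \<or> t = 1")
    case True
    then have "pos a \<in> pos ` f" using t ends[OF assms(2)] by auto
    then obtain c where c: "c \<in> f" "pos c = pos a" by auto
    then have "c \<in> V" using edge[OF assms(2)] by auto
    then have "c = a" using injpos aV c by (auto dest: inj_onD)
    then show False using c assms(4) by simp
  next
    case False then have "t \<in> {0<..<1}" using t by auto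
    then show False using interior[OF assms(2)] t aV by auto
  qed
qed

lemma cross_not_vertex:
  assumes "e \<in> E" "f \<in> E" "e \<inter> f = {}" "s \<in> {0..1}" "t \<in> {0..1}" "crv e s = crv f t"
  shows "crv e s \<notin> pos ` V"
proof
  assume h: "crv e s \<in> pos ` V"
  have "s = 0 \<or> s = 1"
  proof (rule ccontr)
    assume "\<not> (s = 0 \<or> s = 1)"
    then have "s \<in> {0<..<1}" using assms(4) by auto
    then show False using interior[OF assms(1)] h by blast
  qed
  then have "crv e s \<in> pos ` e" using ends[OF assms(1)] by auto
  then obtain a where a: "a \<in> e" "crv e s = pos a" by auto
  have "a \<notin> f" using assms(3) a by auto
  then have "pos a \<notin> path_image (crv f)" using endpt_not_on assms a by blast
  moreover have "crv f t \<in> path_image (crv f)" using assms(5) by (auto simp: path_image_def)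
  ultimately show False using a assms(6) by simp
qed

lemma deriv_eq:
  assumes "e \<in> E"
  obtains D where "\<And>t. t \<in> {0..1} \<Longrightarrow> (crv e has_vector_derivative D t) (at t within {0..1})"
    "\<And>t. t \<in> {0..1} \<Longrightarrow> vector_derivative (crv e) (at t within {0..1}) = D t"
proof -
  obtain D where D: "\<forall>t\<in>{0..1}. (crv e has_vector_derivative D t) (at t within {0..1})"
    using smooth[OF assms] unfolding smooth_curve_def by blast
  have vd: "vector_derivative (crv e) (at t within {0..1}) = D t" if "t \<in> {0..1}" for t
    using vector_derivative_within_cbox[of 0 1 t "crv e" "D t"] D that by (simp add: cbox_interval)
  show ?thesis by (rule that[of D]) (use D vd in auto)
qed

lemma two:
  assumes "e \<in> E" "f \<in> E" "e \<inter> f = {}"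
  shows "two_curves (crv e) (crv f)"
proof -
  obtain a b where ab: "e = {a,b}" "a \<noteq> b" "a \<in> V" "b \<in> V" "crv e 0 = pos a" "crv e 1 = pos b"
    by (rule edge_ends[OF assms(1)])
  obtain c d where cd: "f = {c,d}" "c \<noteq> d" "c \<in> V" "d \<in> V" "crv f 0 = pos c" "crv f 1 = pos d"
    by (rule edge_ends[OF assms(2)])
  have ef: "e \<noteq> f" using assms(3) ab by auto
  obtain De where De: "\<And>t. t \<in> {0..1} \<Longrightarrow> (crv e has_vector_derivative De t) (at t within {0..1})"
    "\<And>t. t \<in> {0..1} \<Longrightarrow> vector_derivative (crv e) (at t within {0..1}) = De t"
    using deriv_eq[OF assms(1)] by blast
  obtain Df where Df: "\<And>t. t \<in> {0..1} \<Longrightarrow> (crv f has_vector_derivative Df t) (at t within {0..1})"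
    "\<And>t. t \<in> {0..1} \<Longrightarrow> vector_derivative (crv f) (at t within {0..1}) = Df t"
    using deriv_eq[OF assms(2)] by blast
  have finS: "finite {p. \<exists>e1\<in>E. \<exists>e2\<in>E. e1 \<noteq> e2 \<and> p \<in> img (crv e1) \<inter> img (crv e2) \<and> p \<notin> pos ` V}"
    using pe by (simp add: proper_embedding_def)
  have trv: "\<forall>e1\<in>E. \<forall>e2\<in>E. \<forall>s\<in>{0..1}. \<forall>t\<in>{0..1}.
        e1 \<noteq> e2 \<and> crv e1 s = crv e2 t \<and> crv e1 s \<notin> pos ` V \<longrightarrow>
        transversal (vector_derivative (crv e1) (at s within {0..1}))
                    (vector_derivative (crv e2) (at t within {0..1}))"
    using pe unfolding proper_embedding_def by blast
  show ?thesis
  proof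
    show "path (crv e)" "path (crv f)" using path_e assms by auto
    show "inj_on (crv e) {0..1}" "inj_on (crv f) {0..1}" using injc assms by auto
    show "crv e 0 \<notin> path_image (crv f)" "crv e 1 \<notin> path_image (crv f)"
      using endpt_not_on[OF assms(1,2)] ab assms(3) by auto
    show "crv f 0 \<notin> path_image (crv e)" "crv f 1 \<notin> path_image (crv e)"
      using endpt_not_on[OF assms(2,1)] cd assms(3) by auto
    show "finite (path_image (crv e) \<inter> path_image (crv f))"
    proof (rule finite_subset[OF _ finS])
      show "path_image (crv e) \<inter> path_image (crv f)
        \<subseteq> {p. \<exists>e1\<in>E. \<exists>e2\<in>E. e1 \<noteq> e2 \<and> p \<in> img (crv e1) \<inter> img (crv e2) \<and> p \<notin> pos ` V}"
      proof
        fix p assume "p \<in> path_image (crv e) \<inter> path_image (crv f)"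
        then obtain s t where st: "s \<in> {0..1}" "t \<in> {0..1}" "p = crv e s" "p = crv f t"
          by (auto simp: path_image_def)
        then have "p \<notin> pos ` V" using cross_not_vertex[OF assms, of s t] by auto
        then show "p \<in> {p. \<exists>e1\<in>E. \<exists>e2\<in>E. e1 \<noteq> e2 \<and> p \<in> img (crv e1) \<inter> img (crv e2) \<and> p \<notin> pos ` V}"
        proof -
          have "p \<in> img (crv e)" "p \<in> img (crv f)" unfolding img_def using st by (metis rev_image_eqI)+
          then show ?thesis using \<open>p \<notin> pos ` V\<close> assms(1,2) ef by blast
        qed
      qed
    qed
    fix s t :: real assume st: "s \<in> {0..1}" "t \<in> {0..1}" "crv e s = crv f t"
    have "crv e s \<notin> pos ` V" using cross_not_vertex[OF assms st] .
    then have "transversal (De s) (Df t)" using trv assms ef st De(2) Df(2) by metis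
    then show "\<exists>u v. (crv e has_vector_derivative u) (at s within {0..1}) \<and>
             (crv f has_vector_derivative v) (at t within {0..1}) \<and> Im (cnj u * v) \<noteq> 0"
      using De(1)[OF st(1)] Df(1)[OF st(2)] by (auto simp: transversal_def)
  qed
qed

lemma pair:
  assumes "e \<in> E" "f \<in> E" "e \<inter> f = {}"
  shows "\<exists>j. int (card (img (crv e) \<inter> img (crv f))) =
     (\<Sum>v\<in>f. kint (crv e) (pos v)) + (\<Sum>u\<in>e. kint (crv f) (pos u)) + (\<Sum>u\<in>e. \<Sum>v\<in>f. nn (pos u) (pos v)) + 2*j"
proof -
  obtain a b where ab: "e = {a,b}" "a \<noteq> b" "a \<in> V" "b \<in> V" "crv e 0 = pos a" "crv e 1 = pos b"
    by (rule edge_ends[OF assms(1)])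
  obtain c d where cd: "f = {c,d}" "c \<noteq> d" "c \<in> V" "d \<in> V" "crv f 0 = pos c" "crv f 1 = pos d"
    by (rule edge_ends[OF assms(2)])
  interpret tc: two_curves "crv e" "crv f" by (rule two[OF assms])
  obtain j where j: "winding_number (crv e) (crv f 0) + winding_number (\<lambda>t. crv e 1 - crv f t) 0
     - winding_number (crv e) (crv f 1) - winding_number (\<lambda>t. crv e 0 - crv f t) 0
     = of_int (int (card (path_image (crv e) \<inter> path_image (crv f))) + 2*j)"
    using tc.core by blast
  have dis: "a \<noteq> c" "a \<noteq> d" "b \<noteq> c" "b \<noteq> d" using assms(3) ab cd by auto
  have pne: "pos a \<noteq> pos c" "pos a \<noteq> pos d" "pos b \<noteq> pos c" "pos b \<noteq> pos d"
    "pos a \<noteq> pos b" "pos c \<noteq> pos d"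
    using dis ab cd injpos by (metis inj_onD)+
  have no: "pos c \<notin> path_image (crv e)" "pos d \<notin> path_image (crv e)"
     "pos a \<notin> path_image (crv f)" "pos b \<notin> path_image (crv f)"
    using endpt_not_on[OF assms(1,2)] endpt_not_on[OF assms(2,1)] ab cd assms(3) by auto
  have w1: "winding_number (\<lambda>t. crv e 1 - crv f t) 0 = winding_number (crv f) (pos b)"
    using wneg[OF valid_e[OF assms(2)]] no ab by simp
  have w0: "winding_number (\<lambda>t. crv e 0 - crv f t) 0 = winding_number (crv f) (pos a)"
    using wneg[OF valid_e[OF assms(2)]] no ab by simp
  define kc where "kc = kint (crv e) (pos c)"
  define kd where "kd = kint (crv e) (pos d)"
  define ka where "ka = kint (crv f) (pos a)"
  define kb where "kb = kint (crv f) (pos b)"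
  have Kc: "winding_number (crv e) (pos c) = of_int kc + Lg (pos a) (pos b) (pos c)"
    using kint_eq[OF path_e[OF assms(1)] no(1)] ab by (simp add: kc_def)
  have Kd: "winding_number (crv e) (pos d) = of_int kd + Lg (pos a) (pos b) (pos d)"
    using kint_eq[OF path_e[OF assms(1)] no(2)] ab by (simp add: kd_def)
  have Ka: "winding_number (crv f) (pos a) = of_int ka + Lg (pos c) (pos d) (pos a)"
    using kint_eq[OF path_e[OF assms(2)] no(3)] cd by (simp add: ka_def)
  have Kb: "winding_number (crv f) (pos b) = of_int kb + Lg (pos c) (pos d) (pos b)"
    using kint_eq[OF path_e[OF assms(2)] no(4)] cd by (simp add: kb_def)
  define N where "N = nn (pos b) (pos c) + nn (pos a) (pos d) + nn (pos d) (pos b) + nn (pos c) (pos a)"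
  have br: "Lg (pos a) (pos b) (pos c) - Lg (pos a) (pos b) (pos d) + Lg (pos c) (pos d) (pos b)
      - Lg (pos c) (pos d) (pos a) = of_int (2 - N)"
  proof -
    let ?T = "\<lambda>x y. Ln (x - y) - Ln (y - x)"
    have pi: "2 * of_real pi * \<i> \<noteq> (0::complex)" by simp
    have "(2 * of_real pi * \<i>) * (Lg (pos a) (pos b) (pos c) - Lg (pos a) (pos b) (pos d) + Lg (pos c) (pos d) (pos b)
      - Lg (pos c) (pos d) (pos a)) = ?T (pos b) (pos c) + ?T (pos a) (pos d) + ?T (pos d) (pos b) + ?T (pos c) (pos a)"
      by (simp only: distrib_left right_diff_distrib Lg_mult) (simp add: algebra_simps)
    also have "\<dots> = (2 * of_real pi * \<i>) * of_int (2 - N)"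
      using pne by (simp add: T_lemma N_def algebra_simps)
    finally show ?thesis using pi by (metis mult_cancel_left)
  qed
  have "of_int (int (card (path_image (crv e) \<inter> path_image (crv f))) + 2*j)
      = (of_int (kc - kd + kb - ka + 2 - N) :: complex)"
    unfolding j[symmetric] w1 w0 using ab cd Kc Kd Ka Kb br
    by (simp add: algebra_simps)
  then have eq: "int (card (path_image (crv e) \<inter> path_image (crv f))) + 2*j = kc - kd + kb - ka + 2 - N"
    using of_int_eq_iff by blast
  have s1: "nn (pos d) (pos b) = 1 - nn (pos b) (pos d)" using nn_sym[OF pne(4)] by simp
  have s2: "nn (pos c) (pos a) = 1 - nn (pos a) (pos c)" using nn_sym[OF pne(1)] by simp
  have sums: "(\<Sum>v\<in>f. kint (crv e) (pos v)) = kc + kd" "(\<Sum>u\<in>e. kint (crv f) (pos u)) = ka + kb"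
    "(\<Sum>u\<in>e. \<Sum>v\<in>f. nn (pos u) (pos v)) = nn (pos a) (pos c) + nn (pos a) (pos d) + nn (pos b) (pos c) + nn (pos b) (pos d)"
    using ab cd by (simp_all add: kc_def kd_def ka_def kb_def)
  have ceq: "int (card (path_image (crv e) \<inter> path_image (crv f))) = kc - kd + kb - ka
      - nn (pos b) (pos c) - nn (pos a) (pos d) + nn (pos b) (pos d) + nn (pos a) (pos c) - 2*j"
    using eq unfolding N_def s1 s2 by linarith
  have img: "img (crv e) \<inter> img (crv f) = path_image (crv e) \<inter> path_image (crv f)"
    by (simp add: img_def path_image_def)
  show ?thesis
    apply (rule exI[of _ "- (kd + ka + nn (pos b) (pos c) + nn (pos a) (pos d) + j)"])
    unfolding sums img ceq by (simp add: algebra_simps)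
qed

end

definition par :: "int \<Rightarrow> 'r::comm_ring_1" where "par x = (if even x then 1 else -1)"

lemma par_add: "par (x + y) = par x * par y" by (auto simp: par_def)
lemma par_2: "par (2 * j) = 1" by (simp add: par_def)
lemma par_uminus: "par (- x) = par x" by (simp add: par_def)
lemma par_diff: "par (x - y) = par x * par y" by (auto simp: par_def)
lemma par_sq: "par x * par x = 1" by (simp add: par_def)
lemma par_pm: "par x = 1 \<or> par x = -1" by (simp add: par_def)
lemma par_nat: "par (int n) = (-1) ^ n" by (simp add: par_def minus_one_power_iff)
lemma par_sum: "finite A \<Longrightarrow> (\<Prod>x\<in>A. par (f x)) = par (\<Sum>x\<in>A. f x)"
  by (induction rule: finite_induct) (auto simp: par_add, simp add: par_def)

lemma sum_mod_ex:
  fixes f g :: "'a \<Rightarrow> int"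
  assumes "finite A" "\<And>x. x \<in> A \<Longrightarrow> \<exists>j. f x = g x + c * j"
  shows "\<exists>J. (\<Sum>x\<in>A. f x) = (\<Sum>x\<in>A. g x) + c * J"
  using assms
proof (induction rule: finite_induct)
  case empty then show ?case by auto
next
  case (insert x A)
  obtain j where j: "f x = g x + c * j" using insert.prems by blast
  obtain J where J: "(\<Sum>x\<in>A. f x) = (\<Sum>x\<in>A. g x) + c * J" using insert by blast
  show ?case using insert.hyps j J by (intro exI[of _ "j + J"]) (simp add: algebra_simps)
qed

definition pairs :: "'a set \<Rightarrow> 'a set set" where "pairs M = {P. P \<subseteq> M \<and> card P = 2}"

lemma ord_pairs:
  assumes fM: "finite M"
  shows "(\<Sum>P\<in>pairs M. \<Sum>e\<in>P. \<Sum>f\<in>P-{e}. h e f) = (\<Sum>e\<in>M. \<Sum>f\<in>M-{e}. h e f)"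
proof -
  let ?D = "Sigma M (\<lambda>e. M - {e})"
  have finD: "finite ?D" using fM by auto
  have finP: "finite (pairs M)" using fM by (auto simp: pairs_def intro: finite_subset[of _ "Pow M"])
  have R: "(\<Sum>e\<in>M. \<Sum>f\<in>M-{e}. h e f) = (\<Sum>(e,f)\<in>?D. h e f)"
    using fM by (simp add: sum.Sigma)
  have img: "(\<lambda>x. {fst x, snd x}) ` ?D \<subseteq> pairs M" by (auto simp: pairs_def)
  have G: "(\<Sum>P\<in>pairs M. \<Sum>x\<in>{x\<in>?D. {fst x, snd x} = P}. (case x of (e,f) \<Rightarrow> h e f)) = (\<Sum>x\<in>?D. case x of (e,f) \<Rightarrow> h e f)"
    by (rule sum.group[OF finD finP img])
  have inner: "{x\<in>?D. {fst x, snd x} = P} = Sigma P (\<lambda>e. P - {e})" if P: "P \<in> pairs M" for P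
  proof -
    obtain x y where xy: "P = {x,y}" "x \<noteq> y" "x \<in> M" "y \<in> M" using P unfolding pairs_def card_2_iff by auto
    show ?thesis using xy by (auto simp: doubleton_eq_iff)
  qed
  have "(\<Sum>P\<in>pairs M. \<Sum>e\<in>P. \<Sum>f\<in>P-{e}. h e f) = (\<Sum>P\<in>pairs M. \<Sum>x\<in>{x\<in>?D. {fst x, snd x} = P}. (case x of (e,f) \<Rightarrow> h e f))"
  proof (rule sum.cong[OF refl])
    fix P assume P: "P \<in> pairs M"
    then have "finite P" using fM by (auto simp: pairs_def intro: finite_subset)
    then show "(\<Sum>e\<in>P. \<Sum>f\<in>P-{e}. h e f) = (\<Sum>x\<in>{x\<in>?D. {fst x, snd x} = P}. (case x of (e,f) \<Rightarrow> h e f))"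
      unfolding inner[OF P] by (simp add: sum.Sigma)
  qed
  then show ?thesis using G R by simp
qed

context emb begin

lemma pm:
  assumes "perfect_matching V E M"
  shows "M \<subseteq> E" "finite M" "\<And>e f. e \<in> M \<Longrightarrow> f \<in> M \<Longrightarrow> e \<noteq> f \<Longrightarrow> e \<inter> f = {}" "\<Union>M = V"
proof -
  show ME: "M \<subseteq> E" using assms by (simp add: perfect_matching_def)
  have "E \<subseteq> Pow V" using edge by auto
  then show "finite M" using ME finV by (meson finite_Pow_iff finite_subset)
  show "e \<inter> f = {}" if "e \<in> M" "f \<in> M" "e \<noteq> f" for e f
  proof (rule ccontr)
    assume "e \<inter> f \<noteq> {}"
    then obtain v where v: "v \<in> e" "v \<in> f" by auto
    then have "v \<in> V" using edge ME that by auto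
    then have "\<exists>!e. e \<in> M \<and> v \<in> e" using assms by (simp add: perfect_matching_def)
    then show False using v that by auto
  qed
  show "\<Union>M = V"
  proof
    show "\<Union>M \<subseteq> V" using edge ME by auto
    show "V \<subseteq> \<Union>M" using assms by (auto simp: perfect_matching_def)
  qed
qed

lemma pm_fin: "perfect_matching V E M \<Longrightarrow> e \<in> M \<Longrightarrow> finite e"
  using pm(1) edge by (metis card.infinite subsetD zero_neq_numeral)

lemma sum_others:
  assumes "perfect_matching V E M" "e \<in> M"
  shows "(\<Sum>f\<in>M-{e}. \<Sum>v\<in>f. F v) = (\<Sum>v\<in>V-e. F v)"
proof -
  have "\<Union>(M - {e}) = V - e"
  proof
    show "\<Union>(M - {e}) \<subseteq> V - e" using pm[OF assms(1)] assms(2) by blast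
    show "V - e \<subseteq> \<Union>(M - {e})" using pm(4)[OF assms(1)] by blast
  qed
  moreover have "sum F (\<Union>(M - {e})) = (\<Sum>f\<in>M-{e}. sum F f)"
    using sum.Union_disjoint[of "M - {e}" F] pm[OF assms(1)] pm_fin[OF assms(1)] by (simp add: o_def)
  ultimately show ?thesis by simp
qed

lemma sum_all:
  assumes "perfect_matching V E M"
  shows "(\<Sum>e\<in>M. \<Sum>u\<in>e. F u) = (\<Sum>u\<in>V. F u)"
proof -
  have "sum F (\<Union>M) = (\<Sum>e\<in>M. sum F e)"
    using sum.Union_disjoint[of M F] pm[OF assms] pm_fin[OF assms] by (simp add: o_def)
  then show ?thesis using pm(4)[OF assms] by simp
qed

end

lemma nn01: "nn x y = 0 \<or> nn x y = 1" by (simp add: nn_def)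

locale two_emb = A: emb V E pos crv + B: emb V E pos' crv'
  for V :: "'v set" and E pos crv pos' crv'
begin

definition "mm u v = (nn (pos u) (pos v) - nn (pos' u) (pos' v))^2"
definition "Bk e f = (\<Sum>v\<in>f. kint (crv e) (pos v) + kint (crv' e) (pos' v))"
definition "Ym e f = (\<Sum>u\<in>e. \<Sum>v\<in>f. mm u v)"
definition "hh e f = 2 * Bk e f + Ym e f"

lemma mm_sym: assumes "u \<in> V" "v \<in> V" "u \<noteq> v" shows "mm v u = mm u v"
proof -
  have "pos u \<noteq> pos v" "pos' u \<noteq> pos' v" using assms A.injpos B.injpos by (metis inj_onD)+
  then have "nn (pos v) (pos u) = 1 - nn (pos u) (pos v)" "nn (pos' v) (pos' u) = 1 - nn (pos' u) (pos' v)"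
    using nn_sym by (metis add_diff_cancel_left')+
  then show ?thesis unfolding mm_def by (simp add: power2_commute)
qed

lemma nn_pair: "nn a b + nn c d = (nn a b - nn c d)^2 + 2 * (nn a b * nn c d)"
  using nn01[of a b] nn01[of c d] by auto

lemma pair2:
  assumes "e \<in> E" "f \<in> E" "e \<inter> f = {}"
  shows "\<exists>j. 2 * (int (card (img (crv e) \<inter> img (crv f))) + int (card (img (crv' e) \<inter> img (crv' f))))
     = hh e f + hh f e + 4 * j"
proof -
  obtain j1 where j1: "int (card (img (crv e) \<inter> img (crv f))) =
     (\<Sum>v\<in>f. kint (crv e) (pos v)) + (\<Sum>u\<in>e. kint (crv f) (pos u)) + (\<Sum>u\<in>e. \<Sum>v\<in>f. nn (pos u) (pos v)) + 2*j1"
    using A.pair[OF assms] by blast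
  obtain j2 where j2: "int (card (img (crv' e) \<inter> img (crv' f))) =
     (\<Sum>v\<in>f. kint (crv' e) (pos' v)) + (\<Sum>u\<in>e. kint (crv' f) (pos' u)) + (\<Sum>u\<in>e. \<Sum>v\<in>f. nn (pos' u) (pos' v)) + 2*j2"
    using B.pair[OF assms] by blast
  define ab where "ab = (\<Sum>u\<in>e. \<Sum>v\<in>f. nn (pos u) (pos v) * nn (pos' u) (pos' v))"
  have Ys: "(\<Sum>u\<in>e. \<Sum>v\<in>f. nn (pos u) (pos v)) + (\<Sum>u\<in>e. \<Sum>v\<in>f. nn (pos' u) (pos' v)) = Ym e f + 2 * ab"
    unfolding Ym_def ab_def mm_def
    by (simp add: sum.distrib[symmetric] sum_distrib_left nn_pair[of "pos _" "pos _" "pos' _" "pos' _"])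
  have Ysym: "Ym f e = Ym e f"
  proof -
    have "Ym f e = (\<Sum>v\<in>e. \<Sum>u\<in>f. mm u v)" unfolding Ym_def by (rule sum.swap)
    also have "\<dots> = Ym e f" unfolding Ym_def
    proof (intro sum.cong refl)
      fix v u assume "v \<in> e" "u \<in> f"
      then show "mm u v = mm v u" using mm_sym[of v u] A.edge assms by blast
    qed
    finally show ?thesis .
  qed
  have Be: "Bk e f = (\<Sum>v\<in>f. kint (crv e) (pos v)) + (\<Sum>v\<in>f. kint (crv' e) (pos' v))"
    unfolding Bk_def by (simp add: sum.distrib)
  have Bf: "Bk f e = (\<Sum>u\<in>e. kint (crv f) (pos u)) + (\<Sum>u\<in>e. kint (crv' f) (pos' u))"
    unfolding Bk_def by (simp add: sum.distrib)
  show ?thesis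
    by (rule exI[of _ "j1 + j2 + ab"]) (use j1 j2 Ys Ysym Be Bf in \<open>simp add: hh_def algebra_simps\<close>)
qed

definition "kap e = (\<Sum>v\<in>V-e. kint (crv e) (pos v) + kint (crv' e) (pos' v))"
definition "TT = (\<Sum>u\<in>V. \<Sum>v\<in>V-{u}. mm u v)"
definition "mu e = (\<Sum>u\<in>e. \<Sum>v\<in>e-{u}. mm u v)"

lemma cross_sum:
  assumes M: "perfect_matching V E M"
  shows "\<exists>J. 2 * (int (crossings crv M) + int (crossings crv' M)) = 2 * (\<Sum>e\<in>M. kap e) + TT - (\<Sum>e\<in>M. mu e) + 4 * J"
proof -
  have fM: "finite M" using A.pm[OF M] by blast
  have finP: "finite (pairs M)" using fM by (auto simp: pairs_def intro: finite_subset[of _ "Pow M"])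
  have C: "int (crossings c M) = (\<Sum>P\<in>pairs M. int (card (\<Inter>e\<in>P. img (c e))))" for c
    unfolding crossings_def pairs_def by simp
  have "\<exists>J. (\<Sum>P\<in>pairs M. 2 * (int (card (\<Inter>e\<in>P. img (crv e))) + int (card (\<Inter>e\<in>P. img (crv' e)))))
     = (\<Sum>P\<in>pairs M. \<Sum>e\<in>P. \<Sum>f\<in>P-{e}. hh e f) + 4 * J"
  proof (rule sum_mod_ex[OF finP])
    fix P assume P: "P \<in> pairs M"
    obtain e f where ef: "P = {e,f}" "e \<noteq> f" using P unfolding pairs_def card_2_iff by auto
    have inM: "e \<in> M" "f \<in> M" using P ef by (auto simp: pairs_def)
    have inE: "e \<in> E" "f \<in> E" using inM A.pm(1)[OF M] by auto
    have dj: "e \<inter> f = {}" using A.pm(3)[OF M inM ef(2)] .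
    obtain j where j: "2 * (int (card (img (crv e) \<inter> img (crv f))) + int (card (img (crv' e) \<inter> img (crv' f))))
     = hh e f + hh f e + 4 * j" using pair2[OF inE dj] by blast
    have "(\<Sum>e'\<in>P. \<Sum>f'\<in>P-{e'}. hh e' f') = hh e f + hh f e"
      using ef by (simp add: insert_Diff_if)
    moreover have "(\<Inter>e'\<in>P. img (c e')) = img (c e) \<inter> img (c f)" for c using ef by simp
    ultimately show "\<exists>j. 2 * (int (card (\<Inter>e\<in>P. img (crv e))) + int (card (\<Inter>e\<in>P. img (crv' e))))
       = (\<Sum>e\<in>P. \<Sum>f\<in>P-{e}. hh e f) + 4 * j" using j by auto
  qed
  then obtain J where J0: "(\<Sum>P\<in>pairs M. 2 * (int (card (\<Inter>e\<in>P. img (crv e))) + int (card (\<Inter>e\<in>P. img (crv' e)))))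
     = (\<Sum>P\<in>pairs M. \<Sum>e\<in>P. \<Sum>f\<in>P-{e}. hh e f) + 4 * J" by blast
  have J: "(\<Sum>P\<in>pairs M. 2 * (int (card (\<Inter>e\<in>P. img (crv e))) + int (card (\<Inter>e\<in>P. img (crv' e)))))
     = (\<Sum>e\<in>M. \<Sum>f\<in>M-{e}. hh e f) + 4 * J" using J0 ord_pairs[OF fM, of hh] by simp
  have L: "2 * (int (crossings crv M) + int (crossings crv' M)) =
      (\<Sum>P\<in>pairs M. 2 * (int (card (\<Inter>e\<in>P. img (crv e))) + int (card (\<Inter>e\<in>P. img (crv' e)))))"
    unfolding C by (simp add: sum.distrib sum_distrib_left)
  have H: "(\<Sum>f\<in>M-{e}. hh e f) = 2 * kap e + (\<Sum>u\<in>e. \<Sum>v\<in>V-{u}. mm u v) - mu e" if e: "e \<in> M" for e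
  proof -
    have eE: "e \<subseteq> V" "finite e" using A.pm(1)[OF M] e A.edge A.pm_fin[OF M e] by auto
    have 1: "(\<Sum>f\<in>M-{e}. Bk e f) = kap e"
      unfolding Bk_def kap_def by (rule A.sum_others[OF M e])
    have "(\<Sum>f\<in>M-{e}. Ym e f) = (\<Sum>u\<in>e. \<Sum>f\<in>M-{e}. \<Sum>v\<in>f. mm u v)"
      unfolding Ym_def by (rule sum.swap)
    also have "\<dots> = (\<Sum>u\<in>e. \<Sum>v\<in>V-e. mm u v)"
      by (intro sum.cong refl A.sum_others[OF M e])
    also have "\<dots> = (\<Sum>u\<in>e. (\<Sum>v\<in>V-{u}. mm u v) - (\<Sum>v\<in>e-{u}. mm u v))"
    proof (intro sum.cong refl)
      fix u assume u: "u \<in> e"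
      have "V - e = (V - {u}) - (e - {u})" using u by auto
      moreover have "e - {u} \<subseteq> V - {u}" using eE by auto
      ultimately show "(\<Sum>v\<in>V-e. mm u v) = (\<Sum>v\<in>V-{u}. mm u v) - (\<Sum>v\<in>e-{u}. mm u v)"
        using A.finV by (simp add: sum_diff)
    qed
    also have "\<dots> = (\<Sum>u\<in>e. \<Sum>v\<in>V-{u}. mm u v) - mu e"
      unfolding mu_def by (simp add: sum_subtractf)
    finally have 2: "(\<Sum>f\<in>M-{e}. Ym e f) = (\<Sum>u\<in>e. \<Sum>v\<in>V-{u}. mm u v) - mu e" .
    show ?thesis unfolding hh_def using 1 2 by (simp add: sum.distrib sum_distrib_left[symmetric])
  qed
  have "(\<Sum>e\<in>M. \<Sum>f\<in>M-{e}. hh e f) = (\<Sum>e\<in>M. 2 * kap e + (\<Sum>u\<in>e. \<Sum>v\<in>V-{u}. mm u v) - mu e)"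
    using H by (rule sum.cong[OF refl])
  also have "\<dots> = 2 * (\<Sum>e\<in>M. kap e) + TT - (\<Sum>e\<in>M. mu e)"
    unfolding TT_def A.sum_all[OF M, symmetric] by (simp add: sum.distrib sum_subtractf sum_distrib_left)
  finally show ?thesis using L J by (intro exI[of _ J]) simp
qed

end

context two_emb begin

lemma mu_even: assumes "e \<in> E" shows "mu e = 2 * (mu e div 2)"
proof -
  obtain a b where ab: "e = {a,b}" "a \<noteq> b" "a \<in> V" "b \<in> V" by (rule A.edge_ends[OF assms])
  have "mu e = mm a b + mm b a" using ab by (simp add: mu_def insert_Diff_if)
  also have "\<dots> = 2 * mm a b" using mm_sym[OF ab(3,4,2)] by simp
  finally show ?thesis by simp
qed

lemma TT_even: assumes "perfect_matching V E M0" shows "TT = 2 * (TT div 2)"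
proof -
  obtain J where J: "2 * (int (crossings crv M0) + int (crossings crv' M0)) = 2 * (\<Sum>e\<in>M0. kap e) + TT - (\<Sum>e\<in>M0. mu e) + 4 * J"
    using cross_sum[OF assms] by blast
  have "2 dvd (\<Sum>e\<in>M0. mu e)"
    by (rule dvd_sum) (use mu_even A.pm(1)[OF assms] in \<open>metis dvd_triv_left subsetD\<close>)
  then obtain k where k: "(\<Sum>e\<in>M0. mu e) = 2 * k" by (auto elim: dvdE)
  have "TT = 2 * (int (crossings crv M0) + int (crossings crv' M0) - (\<Sum>e\<in>M0. kap e) + k - 2 * J)"
    using J k unfolding distrib_left right_diff_distrib by linarith
  then show ?thesis by simp
qed

lemma sign_rel:
  assumes "perfect_matching V E M" "TT = 2 * T2"
  shows "((-1::'r::comm_ring_1) ^ crossings crv M) = (-1) ^ crossings crv' M * par T2 * (\<Prod>e\<in>M. par (kap e - mu e div 2))"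
proof -
  obtain J where J: "2 * (int (crossings crv M) + int (crossings crv' M)) = 2 * (\<Sum>e\<in>M. kap e) + TT - (\<Sum>e\<in>M. mu e) + 4 * J"
    using cross_sum[OF assms(1)] by blast
  have fM: "finite M" using A.pm(2)[OF assms(1)] .
  have mus: "(\<Sum>e\<in>M. mu e) = 2 * (\<Sum>e\<in>M. mu e div 2)"
    unfolding sum_distrib_left using mu_even A.pm(1)[OF assms(1)] by (intro sum.cong refl) auto
  have "int (crossings crv M) + int (crossings crv' M) = (\<Sum>e\<in>M. kap e - mu e div 2) + T2 + 2 * J"
    using J assms(2) mus by (simp add: sum_subtractf algebra_simps)
  then have "par (int (crossings crv M) + int (crossings crv' M)) = (par ((\<Sum>e\<in>M. kap e - mu e div 2)) * par T2 :: 'r)"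
    by (simp add: par_add par_2)
  then have "par (int (crossings crv M)) * par (int (crossings crv' M)) = ((\<Prod>e\<in>M. par (kap e - mu e div 2)) * par T2 :: 'r)"
    by (simp add: par_add par_sum[OF fM])
  then have "par (int (crossings crv M)) * par (int (crossings crv' M)) * par (int (crossings crv' M))
      = ((\<Prod>e\<in>M. par (kap e - mu e div 2)) * par T2 * par (int (crossings crv' M)) :: 'r)" by simp
  then have "par (int (crossings crv M)) = ((\<Prod>e\<in>M. par (kap e - mu e div 2)) * par T2 * par (int (crossings crv' M)) :: 'r)"
    by (simp add: mult.assoc par_sq)
  then show ?thesis by (simp add: par_nat algebra_simps)
qed

end

theorem theorem2:
  fixes V :: "'v set" and E :: "'v set set" and \<omega> :: "'v set \<Rightarrow> 'r::comm_ring_1"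
    and pos pos' :: "'v \<Rightarrow> complex" and crv crv' :: "'v set \<Rightarrow> real \<Rightarrow> complex"
  assumes "simple_graph V E"
    and "\<forall>e\<in>E. \<omega> e \<noteq> 0"
    and "proper_embedding V E pos crv"
    and "proper_embedding V E pos' crv'"
  shows "\<exists>\<omega>'. sign_modification E \<omega> \<omega>' \<and> signed_pm V E \<omega> crv = signed_pm V E \<omega>' crv'"
proof -
  interpret T: two_emb V E pos crv pos' crv'
    by (intro two_emb.intro emb.intro) (use assms in auto)
  show ?thesis
  proof (cases "\<exists>M0. perfect_matching V E M0")
    case False
    then have "{M. perfect_matching V E M} = {}" by auto
    then show ?thesis by (intro exI[of _ \<omega>]) (simp add: sign_modification_def signed_pm_def)
  next
    case True
    then obtain M0 where M0: "perfect_matching V E M0" by blast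
    define T2 where "T2 = T.TT div 2"
    have TT: "T.TT = 2 * T2" using T.TT_even[OF M0] by (simp add: T2_def)
    define g where "g e = T.kap e - T.mu e div 2" for e
    define v0 where "v0 = (SOME v. v \<in> V)"
    define \<delta> :: "'v set \<Rightarrow> 'r" where "\<delta> e = (if V \<noteq> {} \<and> v0 \<in> e then par T2 else 1)" for e
    define \<omega>' where "\<omega>' e = \<omega> e * par (g e) * \<delta> e" for e
    have prod_delta: "(\<Prod>e\<in>M. \<delta> e) = par T2" if M: "perfect_matching V E M" for M
    proof (cases "V = {}")
      case True
      then have "T.TT = 0" unfolding T.TT_def by simp
      then have "T2 = 0" using TT by simp
      then show ?thesis using True by (simp add: \<delta>_def par_def)
    next
      case False
      then have v0: "v0 \<in> V" unfolding v0_def by (simp add: some_in_eq)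
      then obtain e0 where e0: "e0 \<in> M" "v0 \<in> e0" "\<And>e. e \<in> M \<Longrightarrow> v0 \<in> e \<Longrightarrow> e = e0"
        using M unfolding perfect_matching_def by blast
      have fM: "finite M" using T.A.pm(2)[OF M] .
      have "(\<Prod>e\<in>M. \<delta> e) = \<delta> e0 * (\<Prod>e\<in>M-{e0}. \<delta> e)" using prod.remove[OF fM e0(1)] by simp
      moreover have "(\<Prod>e\<in>M-{e0}. \<delta> e) = 1" using e0(3) by (intro prod.neutral) (auto simp: \<delta>_def)
      moreover have "\<delta> e0 = par T2" using e0(2) False unfolding \<delta>_def by simp
      ultimately show ?thesis by simp
    qed
    have sm: "sign_modification E \<omega> \<omega>'"
      unfolding sign_modification_def \<omega>'_def \<delta>_def
      using par_pm[of "g _"] par_pm[of T2] by (auto simp: par_def)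
    have "signed_pm V E \<omega> crv = signed_pm V E \<omega>' crv'"
      unfolding signed_pm_def
    proof (rule sum.cong[OF refl])
      fix M assume "M \<in> {M. perfect_matching V E M}"
      then have M: "perfect_matching V E M" by simp
      have fM: "finite M" using T.A.pm(2)[OF M] .
      have p: "(\<Prod>e\<in>M. \<omega>' e) = (\<Prod>e\<in>M. \<omega> e) * (\<Prod>e\<in>M. par (g e)) * (\<Prod>e\<in>M. \<delta> e)"
        unfolding \<omega>'_def by (simp add: prod.distrib)
      have s: "((-1::'r) ^ crossings crv M) = (-1) ^ crossings crv' M * par T2 * (\<Prod>e\<in>M. par (g e))"
        using T.sign_rel[OF M TT] unfolding g_def .
      show "(-1) ^ crossings crv M * (\<Prod>e\<in>M. \<omega> e) = (-1) ^ crossings crv' M * (\<Prod>e\<in>M. \<omega>' e)"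
        unfolding s p prod_delta[OF M] by (simp only: mult_ac)
    qed
    then show ?thesis using sm by blast
  qed
qed

end
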